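(* Let $\ell:\mathbb{R}\to\mathbb{R}$ be convex with $\ell\ge 0$ and $\min_v\ell(v)=0$. Let $Z\sim p_Z$ and $G\sim\mathcal{N}(0,1)$ independent, and assume $\mathbb{E}|\ell'_+(cG+Z)|^2<\infty$ for all $c\in\mathbb{R}$. Then: (1) $\mathbb{E}|e_\ell(cG+Z;\tau)-\ell(Z)|<\infty$ for all $c\in\mathbb{R},\tau>0$, so $L(c,\tau):=\mathbb{E}[e_\ell(cG+Z;\tau)-\ell(Z)]$ is well defined; $L$ is jointly convex and continuous on $\mathbb{R}\times\mathbb{R}_{>0}$. (2) With $\mathcal{L}(\mathbf{v})=\sum_{j=1}^m\ell(\mathbf{v}_j)$, $\mathbf{z}_j\stackrel{iid}{\sim}p_Z$ and $\mathbf{g}\sim\mathcal{N}(0,\mathbf{I}_m)$ independent, $\frac1m\{e_{\mathcal{L}}(c\mathbf{g}+\mathbf{z};\tau)-\mathcal{L}(\mathbf{z})\}\to L(c,\tau)$ in probability as $m\to\infty$, for all $c\in\mathbb{R},\tau>0$. (3) $\lim_{\tau\to0^+}L(c,\tau)=\mathbb{E}[\ell(cG+Z)-\ell(Z)]<\infty$, $\lim_{\tau\to0^+}L(0,\tau)=0$, and $-\infty<\lim_{\tau\to0^+}\partial_\tau L(0,\tau)\le0$. (4) With $L_0:=\mathbb{E}\ell(Z)\in[0,\infty]$: $\lim_{\tau\to+\infty}L(c,\tau)=-L_0$ and $L(c,\tau)\ge -L_0$ for all $c,\tau>0$; moreover $\lim_{\tau\to+\infty}L(c,\tau)/\tau=0$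 for all $c$.
   Context: For convex $g:\mathbb{R}\to\mathbb{R}$: $g'_+(v):=\sup_{s\in\partial g(v)}|s|$, $e_g(x;\tau):=\min_v\frac{1}{2\tau}(x-v)^2+g(v)$ ($\tau>0$). For $\mathcal{L}:\mathbb{R}^m\to\mathbb{R}$, $e_{\mathcal{L}}(\mathbf{x};\tau):=\min_{\mathbf{v}}\frac{1}{2\tau}\|\mathbf{x}-\mathbf{v}\|_2^2+\mathcal{L}(\mathbf{v})$. *)

theory Defs
  imports "HOL-Probability.Probability"
begin

definition subdiff :: "(real \<Rightarrow> real) \<Rightarrow> real \<Rightarrow> real set" where
  "subdiff g v = {s. \<forall>u. g u \<ge> g v + s * (u - v)}"

definition dplus :: "(real \<Rightarrow> real) \<Rightarrow> real \<Rightarrow> real" where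
  "dplus g v = (SUP s \<in> subdiff g v. \<bar>s\<bar>)"

definition moreau :: "(real \<Rightarrow> real) \<Rightarrow> real \<Rightarrow> real \<Rightarrow> real" where
  "moreau g x \<tau> = (INF v. (1 / (2 * \<tau>)) * (x - v)\<^sup>2 + g v)"

text \<open>Vectors of R^m are represented as functions nat => real, only the
  coordinates 0..m-1 being relevant (the others are fixed to 0 for the minimiser).\<close>
definition rvec :: "nat \<Rightarrow> (nat \<Rightarrow> real) set" where
  "rvec m = {v. \<forall>j\<ge>m. v j = 0}"

definition sqnorm :: "nat \<Rightarrow> (nat \<Rightarrow> real) \<Rightarrow> real" where
  "sqnorm m x = (\<Sum>j<m. (x j)\<^sup>2)"

definition moreau_vec :: "nat \<Rightarrow> ((nat \<Rightarrow> real) \<Rightarrow> real) \<Rightarrow> (nat \<Rightarrow> real) \<Rightarrow> real \<Rightarrow> real" where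
  "moreau_vec m F x \<tau> = (INF v \<in> rvec m. (1 / (2 * \<tau>)) * sqnorm m (\<lambda>j. x j - v j) + F v)"

definition sep_loss :: "(real \<Rightarrow> real) \<Rightarrow> nat \<Rightarrow> (nat \<Rightarrow> real) \<Rightarrow> real" where
  "sep_loss l m v = (\<Sum>j<m. l (v j))"

definition gauss :: "real measure" where
  "gauss = density lborel std_normal_density"

definition ZG :: "real measure \<Rightarrow> (real \<times> real) measure" where
  "ZG PZ = PZ \<Otimes>\<^sub>M gauss"

definition Lfun :: "(real \<Rightarrow> real) \<Rightarrow> real measure \<Rightarrow> real \<Rightarrow> real \<Rightarrow> real" where
  "Lfun l PZ c \<tau> = (\<integral>p. (moreau l (c * snd p + fst p) \<tau> - l (fst p)) \<partial>ZG PZ)"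

definition iidZG :: "real measure \<Rightarrow> (nat \<Rightarrow> real \<times> real) measure" where
  "iidZG PZ = (\<Pi>\<^sub>M j\<in>(UNIV::nat set). ZG PZ)"

definition conv_in_prob :: "'a measure \<Rightarrow> (nat \<Rightarrow> 'a \<Rightarrow> real) \<Rightarrow> real \<Rightarrow> bool" where
  "conv_in_prob M X a \<longleftrightarrow>
     (\<forall>m. X m \<in> borel_measurable M) \<and>
     (\<forall>\<epsilon>>0. (\<lambda>m. measure M {\<omega> \<in> space M. \<bar>X m \<omega> - a\<bar> > \<epsilon>}) \<longlonglongrightarrow> 0)"

end

theory Submission
  imports Defs
begin

locale cvx =
  fixes l :: "real \<Rightarrow> real"
  assumes conv: "convex_on UNIV l"
    and nonneg: "\<And>v. l v \<ge> 0"
begin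

lemma cont: "continuous_on UNIV l"
  by (rule convex_on_continuous) (auto simp: conv)

lemma isCont_l: "isCont l x"
  using cont by (simp add: continuous_on_eq_continuous_at)

lemma swap_quot: "(a - b) / (c - d) = (b - a) / (d - (c::real))"
  by (metis minus_diff_eq minus_divide_divide)

lemma slope_le:
  assumes "a < b" "b < c"
  shows "(l b - l a) / (b - a) \<le> (l c - l b) / (c - b)"
proof -
  have "(l a - l b) / (a - b) \<le> (l a - l c) / (a - c)"
    using convex_on_slope_le(1)[OF conv, of a c b] assms by auto
  also have "\<dots> \<le> (l b - l c) / (b - c)"
    using convex_on_slope_le(2)[OF conv, of a c b] assms by auto
  finally show ?thesis by (simp only: swap_quot)
qed

lemma q_mono:
  assumes "0 < h'" "h' \<le> h"
  shows "(l (v + h') - l v) / h' \<le> (l (v + h) - l v) / h"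
proof (cases "h' = h")
  case False
  then have "(l v - l (v + h')) / (v - (v + h')) \<le> (l v - l (v + h)) / (v - (v + h))"
    using convex_on_slope_le(1)[OF conv, of v "v + h" "v + h'"] assms by auto
  moreover have "(l v - l (v + h)) / (v - (v + h)) = (l (v + h) - l v) / h"
    "(l v - l (v + h')) / (v - (v + h')) = (l (v + h') - l v) / h'"
    by (simp_all only: swap_quot[of "l v"]) simp_all
  ultimately show ?thesis by simp
qed simp

definition rd :: "real \<Rightarrow> real" where
  "rd v = (INF h\<in>{0<..}. (l (v + h) - l v) / h)"

lemma rd_bdd: "bdd_below ((\<lambda>h. (l (v + h) - l v) / h) ` {0<..})"
proof (rule bdd_belowI2[where m="(l v - l (v - 1)) / 1"])
  fix h :: real assume "h \<in> {0<..}"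
  then show "(l v - l (v - 1)) / 1 \<le> (l (v + h) - l v) / h"
    using slope_le[of "v - 1" v "v + h"] by auto
qed

lemma rd_le: "h > 0 \<Longrightarrow> rd v \<le> (l (v + h) - l v) / h"
  unfolding rd_def by (rule cINF_lower[OF rd_bdd]) auto

lemma rd_ge: "u < v \<Longrightarrow> (l v - l u) / (v - u) \<le> rd v"
  unfolding rd_def
proof (rule cINF_greatest)
  fix h :: real assume "u < v" "h \<in> {0<..}"
  then show "(l v - l u) / (v - u) \<le> (l (v + h) - l v) / h"
    using slope_le[of u v "v + h"] by auto
qed auto

lemma rd_subdiff: "rd v \<in> subdiff l v"
  unfolding subdiff_def
proof (safe)
  fix u
  consider "u > v" | "u = v" | "u < v" by linarith
  then show "l v + rd v * (u - v) \<le> l u"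
  proof cases
    case 1
    have "rd v \<le> (l (v + (u - v)) - l v) / (u - v)" using 1 by (intro rd_le) auto
    then show ?thesis using 1 by (simp add: le_divide_eq algebra_simps)
  next
    case 3
    have "(l v - l u) / (v - u) \<le> rd v" using 3 by (rule rd_ge)
    then show ?thesis using 3 by (simp add: divide_le_eq algebra_simps)
  qed simp
qed

lemma subdiff_bounds:
  assumes "s \<in> subdiff l v"
  shows "s \<le> l (v + 1) - l v" "l v - l (v - 1) \<le> s"
  using assms unfolding subdiff_def by (auto dest: spec[of _ "v + 1"] spec[of _ "v - 1"])

lemma subdiff_le_dplus:
  assumes "s \<in> subdiff l v"
  shows "\<bar>s\<bar> \<le> dplus l v"
  unfolding dplus_def
proof (rule cSUP_upper[OF assms])
  show "bdd_above (abs ` subdiff l v)"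
  proof (rule bdd_aboveI2[where M="\<bar>l (v + 1) - l v\<bar> + \<bar>l v - l (v - 1)\<bar>"])
    fix s assume "s \<in> subdiff l v"
    from subdiff_bounds[OF this] show "\<bar>s\<bar> \<le> \<bar>l (v + 1) - l v\<bar> + \<bar>l v - l (v - 1)\<bar>"
      by linarith
  qed
qed

lemma rd_sq_le: "(rd v)\<^sup>2 \<le> (dplus l v)\<^sup>2"
proof -
  have "\<bar>rd v\<bar> \<le> dplus l v" by (rule subdiff_le_dplus[OF rd_subdiff])
  then show ?thesis by (metis abs_ge_zero power2_abs power_mono)
qed

lemma subdiff_mono:
  assumes "s \<in> subdiff l a" "t \<in> subdiff l b"
  shows "(s - t) * (a - b) \<ge> 0"
proof -
  have "l b \<ge> l a + s * (b - a)" "l a \<ge> l b + t * (a - b)"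
    using assms unfolding subdiff_def by auto
  then show ?thesis by (simp add: algebra_simps)
qed

lemma rd_lim: "(\<lambda>n. (l (v + 1 / real (Suc n)) - l v) / (1 / real (Suc n))) \<longlonglongrightarrow> rd v"
proof (rule LIMSEQ_I)
  fix r :: real assume "r > 0"
  have "\<exists>h\<in>{0<..}. (l (v + h) - l v) / h < rd v + r"
  proof -
    have "(INF h\<in>{0<..}. (l (v + h) - l v) / h) < rd v + r" using \<open>r > 0\<close> by (simp add: rd_def)
    then show ?thesis by (subst (asm) cINF_less_iff[OF _ rd_bdd]) auto
  qed
  then obtain h where h: "h > 0" "(l (v + h) - l v) / h < rd v + r" by auto
  obtain N :: nat where N: "1 / real (Suc N) < h"
    using reals_Archimedean[OF h(1)] by (metis inverse_eq_divide of_nat_Suc)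
  show "\<exists>no. \<forall>n\<ge>no. norm ((l (v + 1 / real (Suc n)) - l v) / (1 / real (Suc n)) - rd v) < r"
  proof (intro exI allI impI)
    fix n assume "N \<le> n"
    then have "1 / real (Suc n) \<le> 1 / real (Suc N)"
      by (intro divide_left_mono) auto
    then have hn: "1 / real (Suc n) < h" "1 / real (Suc n) > 0" using N by auto
    have a: "rd v \<le> (l (v + 1 / real (Suc n)) - l v) / (1 / real (Suc n))"
      by (rule rd_le) auto
    have b: "(l (v + 1 / real (Suc n)) - l v) / (1 / real (Suc n)) \<le> (l (v + h) - l v) / h"
      using hn by (intro q_mono) auto
    show "norm ((l (v + 1 / real (Suc n)) - l v) / (1 / real (Suc n)) - rd v) < r"
      using a b h by auto
  qed
qed

lemma rd_measurable[measurable]: "rd \<in> borel_measurable borel"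
proof (rule borel_measurable_LIMSEQ_real[OF rd_lim])
  fix n
  have "continuous_on UNIV (\<lambda>v. (l (v + 1 / real (Suc n)) - l v) / (1 / real (Suc n)))"
    by (intro continuous_intros continuous_on_compose2[OF cont]) auto
  then show "(\<lambda>v. (l (v + 1 / real (Suc n)) - l v) / (1 / real (Suc n))) \<in> borel_measurable borel"
    by (rule borel_measurable_continuous_onI)
qed

lemma l_measurable[measurable]: "l \<in> borel_measurable borel"
  using cont by (rule borel_measurable_continuous_onI)

end

lemma sq_cancel: "0 \<le> (a::real) \<Longrightarrow> 0 \<le> b \<Longrightarrow> a * a \<le> b * a \<Longrightarrow> a \<le> b"
  by (cases "a = 0") (auto simp: mult_le_cancel_right)

lemma sq_cancel2:
  assumes "0 \<le> (a::real)" "0 \<le> b" "0 < t" "t * (a * a) \<le> b * a"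
  shows "t * a \<le> b"
proof (cases "a = 0")
  case False
  then have a: "a > 0" using assms(1) by simp
  have "(t * a) * a \<le> b * a" using assms(4) by (simp add: mult.assoc)
  then show ?thesis using a by (simp add: mult_le_cancel_right)
qed (use assms in simp)

lemma sq_gt: "0 \<le> (y::real) \<Longrightarrow> y < (y + 1) * (y + 1)"
proof -
  assume h: "0 \<le> y"
  have "0 \<le> y * y" using h by simp
  moreover have "(y + 1) * (y + 1) = y * y + 2 * y + 1" by (simp add: algebra_simps)
  ultimately show ?thesis using h by linarith
qed

lemma frac_lt: "D > 0 \<Longrightarrow> C \<ge> 0 \<Longrightarrow> D / (2 * C + 1) * C < (D::real)"
proof -
  assume D: "D > 0" and C: "C \<ge> 0"
  have "D / (2 * C + 1) * C = D * (C / (2 * C + 1))" by simp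
  also have "C / (2 * C + 1) < 1" using C by simp
  then have "D * (C / (2 * C + 1)) < D * 1" using D by (intro mult_strict_left_mono) auto
  finally show ?thesis by simp
qed

context cvx
begin

definition phi :: "real \<Rightarrow> real \<Rightarrow> real \<Rightarrow> real" where
  "phi x \<tau> v = (1 / (2 * \<tau>)) * (x - v)\<^sup>2 + l v"

lemma moreau_phi: "moreau l x \<tau> = (INF v. phi x \<tau> v)"
  unfolding moreau_def phi_def ..

lemma phi_nonneg: "\<tau> > 0 \<Longrightarrow> phi x \<tau> v \<ge> 0"
  unfolding phi_def using nonneg[of v] by (intro add_nonneg_nonneg mult_nonneg_nonneg) auto

lemma phi_bdd: "\<tau> > 0 \<Longrightarrow> bdd_below (range (phi x \<tau>))"
  by (rule bdd_belowI2[where m=0]) (rule phi_nonneg)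

lemma mo_le: "\<tau> > 0 \<Longrightarrow> moreau l x \<tau> \<le> phi x \<tau> v"
  unfolding moreau_phi by (rule cINF_lower[OF phi_bdd]) auto

lemma mo_ge: "(\<And>v. a \<le> phi x \<tau> v) \<Longrightarrow> a \<le> moreau l x \<tau>"
  unfolding moreau_phi by (rule cINF_greatest) auto

lemma mo_nonneg: "\<tau> > 0 \<Longrightarrow> 0 \<le> moreau l x \<tau>"
  by (rule mo_ge) (rule phi_nonneg)

lemma mo_le_l: "\<tau> > 0 \<Longrightarrow> moreau l x \<tau> \<le> l x"
  using mo_le[of \<tau> x x] by (simp add: phi_def)

lemma mo_lower:
  assumes "\<tau> > 0" "s \<in> subdiff l x"
  shows "l x - \<tau> * s\<^sup>2 / 2 \<le> moreau l x \<tau>"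
proof (rule mo_ge)
  fix v
  have sub: "l v \<ge> l x + s * (v - x)" using assms(2) unfolding subdiff_def by auto
  have "0 \<le> (v - x + \<tau> * s)\<^sup>2 / (2 * \<tau>)" using assms(1) by simp
  also have "(v - x + \<tau> * s)\<^sup>2 / (2 * \<tau>) = (1 / (2 * \<tau>)) * (x - v)\<^sup>2 + s * (v - x) + \<tau> * s\<^sup>2 / 2"
    using assms(1) by (simp add: field_simps power2_eq_square)
  finally show "l x - \<tau> * s\<^sup>2 / 2 \<le> phi x \<tau> v"
    unfolding phi_def using sub by linarith
qed

lemma phi_cont: "continuous_on A (phi x \<tau>)"
  unfolding phi_def by (intro continuous_intros continuous_on_subset[OF cont]) auto

lemma minimizer_ex:
  assumes "\<tau> > 0"
  shows "\<exists>p. \<forall>v. phi x \<tau> p \<le> phi x \<tau> v"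
proof -
  define R where "R = 2 * \<tau> * l x + 1"
  have a: "0 \<le> 2 * \<tau> * l x" using nonneg[of x] assms by simp
  have R: "R > 0" "R\<^sup>2 > 2 * \<tau> * l x"
    unfolding R_def power2_eq_square using a sq_gt[OF a] by auto
  obtain p where p: "p \<in> cball x R" "\<And>y. y \<in> cball x R \<Longrightarrow> phi x \<tau> p \<le> phi x \<tau> y"
    using continuous_attains_inf[OF compact_cball, of x R "phi x \<tau>"] R phi_cont by auto
  have "phi x \<tau> p \<le> phi x \<tau> v" for v
  proof (cases "v \<in> cball x R")
    case True then show ?thesis by (rule p)
  next
    case False
    then have "R < \<bar>x - v\<bar>" by (simp add: dist_real_def)
    then have "R\<^sup>2 < (x - v)\<^sup>2" using R by (metis abs_ge_zero abs_of_pos power2_abs power_strict_mono zero_less_numeral)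
    then have "l x < (1 / (2 * \<tau>)) * (x - v)\<^sup>2"
      using R assms by (simp add: field_simps)
    then have "phi x \<tau> x < phi x \<tau> v" unfolding phi_def using nonneg[of v] by simp
    moreover have "phi x \<tau> p \<le> phi x \<tau> x" using p R by auto
    ultimately show ?thesis by simp
  qed
  then show ?thesis by blast
qed

definition pm :: "real \<Rightarrow> real \<Rightarrow> real" where
  "pm x \<tau> = (SOME p. \<forall>v. phi x \<tau> p \<le> phi x \<tau> v)"

lemma pm_min: "\<tau> > 0 \<Longrightarrow> phi x \<tau> (pm x \<tau>) \<le> phi x \<tau> v"
  unfolding pm_def using someI_ex[OF minimizer_ex] by blast

lemma mo_eq: "\<tau> > 0 \<Longrightarrow> moreau l x \<tau> = phi x \<tau> (pm x \<tau>)"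
  by (intro antisym mo_le mo_ge pm_min)

lemma pm_opt:
  assumes "\<tau> > 0"
  shows "(x - pm x \<tau>) / \<tau> \<in> subdiff l (pm x \<tau>)"
  unfolding subdiff_def
proof safe
  fix u
  define p where "p = pm x \<tau>"
  define s where "s = (x - p) / \<tau>"
  have key: "l u - l p \<ge> s * (u - p) - t * (u - p)\<^sup>2 / (2 * \<tau>)" if t: "0 < t" "t \<le> 1" for t
  proof -
    define ut where "ut = p + t * (u - p)"
    have "l ut \<le> (1 - t) * l p + t * l u"
      using convex_onD[OF conv, of t p u] t unfolding ut_def by (simp add: algebra_simps)
    moreover have "phi x \<tau> p \<le> phi x \<tau> ut" unfolding p_def by (rule pm_min[OF assms])
    ultimately have "t * (l u - l p) \<ge> (1 / (2 * \<tau>)) * ((x - p)\<^sup>2 - (x - ut)\<^sup>2)"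
      unfolding phi_def by (simp add: algebra_simps)
    also have "(1 / (2 * \<tau>)) * ((x - p)\<^sup>2 - (x - ut)\<^sup>2) = t * (s * (u - p) - t * (u - p)\<^sup>2 / (2 * \<tau>))"
      unfolding ut_def s_def using assms by (simp add: field_simps power2_eq_square)
    finally show ?thesis using t by (simp add: mult_le_cancel_left_pos)
  qed
  show "l p + s * (u - p) \<le> l u"
  proof (rule ccontr)
    assume "\<not> ?thesis"
    then have d: "s * (u - p) - (l u - l p) > 0" by simp
    define C where "C = (u - p)\<^sup>2 / (2 * \<tau>)"
    have C: "C \<ge> 0" unfolding C_def using assms by simp
    define t where "t = min 1 ((s * (u - p) - (l u - l p)) / (2 * C + 1))"
    have t: "0 < t" "t \<le> 1" unfolding t_def using d C by auto
    have "t * C < s * (u - p) - (l u - l p)"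
    proof -
      have "t * C \<le> ((s * (u - p) - (l u - l p)) / (2 * C + 1)) * C"
        unfolding t_def using C by (intro mult_right_mono) auto
      also have "\<dots> < s * (u - p) - (l u - l p)"
        using frac_lt[OF d C] .
      finally show ?thesis .
    qed
    with key[OF t] show False unfolding C_def by (simp add: algebra_simps)
  qed
qed

lemma pm_bound:
  assumes "\<tau> > 0" "s \<in> subdiff l x"
  shows "\<bar>x - pm x \<tau>\<bar> \<le> \<tau> * \<bar>s\<bar>"
proof -
  define p where "p = pm x \<tau>"
  have "((x - p) / \<tau> - s) * (p - x) \<ge> 0"
    using subdiff_mono[OF pm_opt[OF assms(1)] assms(2)] unfolding p_def .
  then have "(x - p)\<^sup>2 / \<tau> \<le> s * (x - p)"
    using assms(1) by (simp add: field_simps power2_eq_square)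
  also have "\<dots> \<le> \<bar>s\<bar> * \<bar>x - p\<bar>" by (simp add: abs_mult[symmetric])
  finally have "\<bar>x - p\<bar>\<^sup>2 \<le> \<tau> * (\<bar>s\<bar> * \<bar>x - p\<bar>)"
    using assms(1) by (simp add: field_simps)
  then have h: "\<bar>x - p\<bar> * \<bar>x - p\<bar> \<le> (\<tau> * \<bar>s\<bar>) * \<bar>x - p\<bar>"
    by (simp add: power2_eq_square algebra_simps)
  show ?thesis unfolding p_def[symmetric]
    using sq_cancel[OF abs_ge_zero _ h] assms(1) by simp
qed

lemma pm_compare:
  fixes x :: real
  assumes "\<tau> > 0" "\<tau>' > 0"
  defines "s \<equiv> (x - pm x \<tau>) / \<tau>" and "s' \<equiv> (x - pm x \<tau>') / \<tau>'"
  shows "\<tau> * (s - s')\<^sup>2 \<le> (\<tau>' - \<tau>) * s' * (s - s')"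
proof -
  have "(s - s') * (pm x \<tau> - pm x \<tau>') \<ge> 0"
    unfolding s_def s'_def by (rule subdiff_mono[OF pm_opt[OF assms(1)] pm_opt[OF assms(2)]])
  moreover have "pm x \<tau> - pm x \<tau>' = \<tau>' * s' - \<tau> * s"
    unfolding s_def s'_def using assms by (simp add: field_simps)
  ultimately have "(s - s') * (\<tau>' * s' - \<tau> * s) \<ge> 0" by simp
  then show ?thesis by (simp add: algebra_simps power2_eq_square)
qed

lemma pm_mono:
  assumes "\<tau> > 0" "\<tau> \<le> \<tau>'"
  shows "((x - pm x \<tau>') / \<tau>')\<^sup>2 \<le> ((x - pm x \<tau>) / \<tau>)\<^sup>2"
proof -
  define s where "s = (x - pm x \<tau>) / \<tau>"
  define s' where "s' = (x - pm x \<tau>') / \<tau>'"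
  have "\<tau> * (s - s')\<^sup>2 \<le> (\<tau>' - \<tau>) * s' * (s - s')"
    unfolding s_def s'_def by (rule pm_compare) (use assms in auto)
  moreover have "\<tau> * (s - s')\<^sup>2 \<ge> 0" using assms by simp
  ultimately have "(\<tau>' - \<tau>) * (s' * (s - s')) \<ge> 0" by (simp add: algebra_simps)
  then have "s' * (s - s') \<ge> 0 \<or> \<tau>' = \<tau>"
    using assms by (auto simp: zero_le_mult_iff)
  then have "s'\<^sup>2 \<le> s\<^sup>2"
  proof
    assume "s' * (s - s') \<ge> 0"
    then have "s' * s' \<le> s' * s" by (simp add: algebra_simps)
    then have "s'\<^sup>2 \<le> \<bar>s'\<bar> * \<bar>s\<bar>" by (simp add: power2_eq_square abs_mult[symmetric])
    then have "\<bar>s'\<bar> * \<bar>s'\<bar> \<le> \<bar>s\<bar> * \<bar>s'\<bar>" by (simp add: power2_eq_square algebra_simps)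
    then have "\<bar>s'\<bar> \<le> \<bar>s\<bar>" by (rule sq_cancel[OF abs_ge_zero abs_ge_zero])
    then show ?thesis by (metis abs_ge_zero power2_abs power_mono)
  qed (simp add: s_def s'_def)
  then show ?thesis unfolding s_def s'_def .
qed

lemma pm_lip:
  assumes "\<tau> > 0" "\<tau>' > 0" "g \<in> subdiff l x"
  shows "\<bar>pm x \<tau> - pm x \<tau>'\<bar> \<le> 2 * \<bar>\<tau>' - \<tau>\<bar> * \<bar>g\<bar>"
proof -
  define s where "s = (x - pm x \<tau>) / \<tau>"
  define s' where "s' = (x - pm x \<tau>') / \<tau>'"
  have c: "\<tau> * (s - s')\<^sup>2 \<le> (\<tau>' - \<tau>) * s' * (s - s')"
    unfolding s_def s'_def by (rule pm_compare) (use assms in auto)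
  have s'g: "\<bar>s'\<bar> \<le> \<bar>g\<bar>"
    using pm_bound[OF assms(2,3)] assms(2) unfolding s'_def by (simp add: divide_le_eq abs_div mult.commute)
  have "(\<tau>' - \<tau>) * s' * (s - s') \<le> \<bar>\<tau>' - \<tau>\<bar> * \<bar>s'\<bar> * \<bar>s - s'\<bar>"
    by (metis abs_ge_self abs_mult)
  with c have "\<tau> * (\<bar>s - s'\<bar> * \<bar>s - s'\<bar>) \<le> (\<bar>\<tau>' - \<tau>\<bar> * \<bar>s'\<bar>) * \<bar>s - s'\<bar>"
    by (simp add: power2_eq_square algebra_simps)
  then have a: "\<tau> * \<bar>s - s'\<bar> \<le> \<bar>\<tau>' - \<tau>\<bar> * \<bar>s'\<bar>"
    by (rule sq_cancel2[OF abs_ge_zero mult_nonneg_nonneg[OF abs_ge_zero abs_ge_zero] assms(1)])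
  have "pm x \<tau> - pm x \<tau>' = \<tau>' * s' - \<tau> * s"
    unfolding s_def s'_def using assms by (simp add: field_simps)
  also have "\<dots> = (\<tau>' - \<tau>) * s' - \<tau> * (s - s')" by (simp add: algebra_simps)
  finally have "\<bar>pm x \<tau> - pm x \<tau>'\<bar> \<le> \<bar>\<tau>' - \<tau>\<bar> * \<bar>s'\<bar> + \<tau> * \<bar>s - s'\<bar>"
    using assms(1) by (simp add: abs_mult) (metis abs_diff_le_iff abs_mult abs_of_pos abs_triangle_ineq4 add_mono assms(1) dual_order.trans order.refl)
  also have "\<dots> \<le> 2 * (\<bar>\<tau>' - \<tau>\<bar> * \<bar>s'\<bar>)" using a by linarith
  also have "\<dots> \<le> 2 * (\<bar>\<tau>' - \<tau>\<bar> * \<bar>g\<bar>)" using s'g by (simp add: mult_left_mono)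
  finally show ?thesis by simp
qed

end

lemma persp:
  fixes a b t1 t2 t :: real
  assumes "t1 > 0" "t2 > 0" "0 \<le> t" "t \<le> 1"
  shows "((1 - t) * a + t * b)\<^sup>2 / ((1 - t) * t1 + t * t2) \<le> (1 - t) * (a\<^sup>2 / t1) + t * (b\<^sup>2 / t2)"
proof -
  define u where "u = 1 - t"
  have u: "u \<ge> 0" using assms unfolding u_def by simp
  have D: "u * t1 + t * t2 > 0"
  proof (cases "t = 0")
    case True then show ?thesis using assms u_def by simp
  next
    case False then have "t * t2 > 0" using assms by simp
    moreover have "u * t1 \<ge> 0" using u assms by simp
    ultimately show ?thesis by linarith
  qed
  have eq: "(u * (a\<^sup>2 / t1) + t * (b\<^sup>2 / t2)) * (u * t1 + t * t2) - (u * a + t * b)\<^sup>2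
      = u * t * (a * t2 - b * t1)\<^sup>2 / (t1 * t2)"
    using assms by (simp add: field_simps power2_eq_square)
  have "u * t * (a * t2 - b * t1)\<^sup>2 / (t1 * t2) \<ge> 0"
    using u assms by simp
  then have "(u * a + t * b)\<^sup>2 \<le> (u * (a\<^sup>2 / t1) + t * (b\<^sup>2 / t2)) * (u * t1 + t * t2)"
    using eq by linarith
  then show ?thesis unfolding u_def[symmetric] using D by (simp add: divide_le_eq)
qed

lemma minmax_abs: "min b1 b2 \<le> Q \<and> Q \<le> max b1 b2 \<Longrightarrow> \<bar>b1\<bar> \<le> M \<Longrightarrow> \<bar>b2\<bar> \<le> M \<Longrightarrow> \<bar>Q\<bar> \<le> (M::real)"
  by (auto simp: abs_le_iff min_def max_def split: if_splits)

context cvx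
begin

lemma mo_convex:
  assumes "t1 > 0" "t2 > 0" "0 \<le> t" "t \<le> 1"
  shows "moreau l ((1 - t) * x1 + t * x2) ((1 - t) * t1 + t * t2)
    \<le> (1 - t) * moreau l x1 t1 + t * moreau l x2 t2"
proof -
  define p1 where "p1 = pm x1 t1"
  define p2 where "p2 = pm x2 t2"
  define tt where "tt = (1 - t) * t1 + t * t2"
  have tt: "tt > 0"
  proof (cases "t = 0")
    case True then show ?thesis using assms tt_def by simp
  next
    case False then have "t * t2 > 0" using assms by simp
    moreover have "(1 - t) * t1 \<ge> 0" using assms by simp
    ultimately show ?thesis unfolding tt_def by linarith
  qed
  have "moreau l ((1 - t) * x1 + t * x2) tt \<le> phi ((1 - t) * x1 + t * x2) tt ((1 - t) * p1 + t * p2)"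
    by (rule mo_le[OF tt])
  also have "\<dots> = ((1 - t) * (x1 - p1) + t * (x2 - p2))\<^sup>2 / (2 * tt) + l ((1 - t) * p1 + t * p2)"
    unfolding phi_def by (simp add: algebra_simps)
  also have "((1 - t) * (x1 - p1) + t * (x2 - p2))\<^sup>2 / (2 * tt)
      \<le> ((1 - t) * ((x1 - p1)\<^sup>2 / t1) + t * ((x2 - p2)\<^sup>2 / t2)) / 2"
  proof -
    have h: "((1 - t) * (x1 - p1) + t * (x2 - p2))\<^sup>2 / tt \<le> (1 - t) * ((x1 - p1)\<^sup>2 / t1) + t * ((x2 - p2)\<^sup>2 / t2)"
      using persp[OF assms, of "x1 - p1" "x2 - p2"] unfolding tt_def .
    have "((1 - t) * (x1 - p1) + t * (x2 - p2))\<^sup>2 / (2 * tt) = (((1 - t) * (x1 - p1) + t * (x2 - p2))\<^sup>2 / tt) / 2"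
      by simp
    also have "\<dots> \<le> ((1 - t) * ((x1 - p1)\<^sup>2 / t1) + t * ((x2 - p2)\<^sup>2 / t2)) / 2"
      using h by (rule divide_right_mono) simp
    finally show ?thesis .
  qed
  also have "l ((1 - t) * p1 + t * p2) \<le> (1 - t) * l p1 + t * l p2"
    using convex_onD[OF conv, of t p1 p2] assms by simp
  also have "((1 - t) * ((x1 - p1)\<^sup>2 / t1) + t * ((x2 - p2)\<^sup>2 / t2)) / 2 + ((1 - t) * l p1 + t * l p2)
      = (1 - t) * phi x1 t1 p1 + t * phi x2 t2 p2"
    unfolding phi_def using assms by (simp add: field_simps)
  also have "\<dots> = (1 - t) * moreau l x1 t1 + t * moreau l x2 t2"
    unfolding p1_def p2_def using assms by (simp add: mo_eq)
  finally show ?thesis unfolding tt_def by simp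
qed

lemma mo_convex_x:
  assumes "\<tau> > 0"
  shows "convex_on UNIV (\<lambda>x. moreau l x \<tau>)"
proof (rule convex_onI)
  fix t x y :: real assume "t > 0" "t < 1"
  then show "moreau l ((1 - t) *\<^sub>R x + t *\<^sub>R y) \<tau> \<le> (1 - t) * moreau l x \<tau> + t * moreau l y \<tau>"
    using mo_convex[OF assms assms, of t x y] by (simp add: algebra_simps)
qed auto

lemma mo_cont_x: "\<tau> > 0 \<Longrightarrow> continuous_on UNIV (\<lambda>x. moreau l x \<tau>)"
  by (rule convex_on_continuous) (auto intro: mo_convex_x)

lemma mo_measurable[measurable]: "\<tau> > 0 \<Longrightarrow> (\<lambda>x. moreau l x \<tau>) \<in> borel_measurable borel"
  by (rule borel_measurable_continuous_onI[OF mo_cont_x])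

lemma mo_diff_bounds:
  assumes "\<tau> > 0" "\<tau>' > 0"
  shows "moreau l x \<tau>' - moreau l x \<tau> \<le> - (x - pm x \<tau>)\<^sup>2 * (\<tau>' - \<tau>) / (2 * \<tau> * \<tau>')"
    and "moreau l x \<tau>' - moreau l x \<tau> \<ge> - (x - pm x \<tau>')\<^sup>2 * (\<tau>' - \<tau>) / (2 * \<tau> * \<tau>')"
proof -
  have "moreau l x \<tau>' \<le> phi x \<tau>' (pm x \<tau>)" by (rule mo_le[OF assms(2)])
  moreover have "moreau l x \<tau> = phi x \<tau> (pm x \<tau>)" by (rule mo_eq[OF assms(1)])
  moreover have "phi x \<tau>' (pm x \<tau>) - phi x \<tau> (pm x \<tau>) = - (x - pm x \<tau>)\<^sup>2 * (\<tau>' - \<tau>) / (2 * \<tau> * \<tau>')"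
    unfolding phi_def using assms by (simp add: field_simps)
  ultimately show "moreau l x \<tau>' - moreau l x \<tau> \<le> - (x - pm x \<tau>)\<^sup>2 * (\<tau>' - \<tau>) / (2 * \<tau> * \<tau>')"
    by linarith
next
  have "moreau l x \<tau> \<le> phi x \<tau> (pm x \<tau>')" by (rule mo_le[OF assms(1)])
  moreover have "moreau l x \<tau>' = phi x \<tau>' (pm x \<tau>')" by (rule mo_eq[OF assms(2)])
  moreover have "phi x \<tau>' (pm x \<tau>') - phi x \<tau> (pm x \<tau>') = - (x - pm x \<tau>')\<^sup>2 * (\<tau>' - \<tau>) / (2 * \<tau> * \<tau>')"
    unfolding phi_def using assms by (simp add: field_simps)
  ultimately show "moreau l x \<tau>' - moreau l x \<tau> \<ge> - (x - pm x \<tau>')\<^sup>2 * (\<tau>' - \<tau>) / (2 * \<tau> * \<tau>')"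
    by linarith
qed

lemma quot_between:
  fixes x :: real
  assumes "\<tau> > 0" "\<tau>' > 0" "\<tau>' \<noteq> \<tau>"
  defines "Q \<equiv> (moreau l x \<tau>' - moreau l x \<tau>) / (\<tau>' - \<tau>)"
  defines "b1 \<equiv> - (x - pm x \<tau>)\<^sup>2 / (2 * \<tau> * \<tau>')" and "b2 \<equiv> - (x - pm x \<tau>')\<^sup>2 / (2 * \<tau> * \<tau>')"
  shows "min b1 b2 \<le> Q \<and> Q \<le> max b1 b2"
proof (cases "\<tau>' > \<tau>")
  case True
  have "Q \<le> b1" unfolding Q_def b1_def using mo_diff_bounds(1)[OF assms(1,2), of x] True
    by (simp add: divide_le_eq mult.commute)
  moreover have "Q \<ge> b2" unfolding Q_def b2_def using mo_diff_bounds(2)[OF assms(1,2), of x] True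
    by (simp add: le_divide_eq mult.commute)
  ultimately show ?thesis by linarith
next
  case False
  then have F: "\<tau>' - \<tau> < 0" using assms by simp
  have "Q \<ge> b1" unfolding Q_def b1_def using mo_diff_bounds(1)[OF assms(1,2), of x] F
    by (simp add: neg_le_divide_eq mult.commute)
  moreover have "Q \<le> b2" unfolding Q_def b2_def using mo_diff_bounds(2)[OF assms(1,2), of x] F
    by (simp add: neg_divide_le_eq mult.commute)
  ultimately show ?thesis by linarith
qed

lemma pm_tendsto:
  assumes "\<tau> > 0"
  shows "((\<lambda>t. pm x t) \<longlongrightarrow> pm x \<tau>) (at \<tau>)"
proof -
  have "((\<lambda>t. pm x t - pm x \<tau>) \<longlongrightarrow> 0) (at \<tau>)"
  proof (rule Lim_null_comparison)
    show "\<forall>\<^sub>F t in at \<tau>. norm (pm x t - pm x \<tau>) \<le> 2 * \<bar>t - \<tau>\<bar> * \<bar>rd x\<bar>"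
      unfolding eventually_at
    proof (intro exI[of _ \<tau>] conjI ballI impI)
      fix t assume "t \<in> UNIV" "t \<noteq> \<tau> \<and> dist t \<tau> < \<tau>"
      then have "t > 0" by (auto simp: dist_real_def abs_less_iff)
      then show "norm (pm x t - pm x \<tau>) \<le> 2 * \<bar>t - \<tau>\<bar> * \<bar>rd x\<bar>"
        using pm_lip[OF \<open>t > 0\<close> assms rd_subdiff] by (simp add: abs_minus_commute)
    qed (use assms in simp)
    show "((\<lambda>t. 2 * \<bar>t - \<tau>\<bar> * \<bar>rd x\<bar>) \<longlongrightarrow> 0) (at \<tau>)"
      by (rule tendsto_eq_intros | simp)+
  qed
  then show ?thesis by (simp add: LIM_zero_iff)
qed

lemma mo_deriv:
  assumes "\<tau> > 0"
  shows "((\<lambda>t. moreau l x t) has_real_derivative (- ((x - pm x \<tau>) / \<tau>)\<^sup>2 / 2)) (at \<tau>)"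
  unfolding has_field_derivative_iff
proof (rule tendsto_sandwich)
  let ?b1 = "\<lambda>t. - (x - pm x \<tau>)\<^sup>2 / (2 * \<tau> * t)"
  let ?b2 = "\<lambda>t. - (x - pm x t)\<^sup>2 / (2 * \<tau> * t)"
  have ev: "\<forall>\<^sub>F t in at \<tau>. t > 0 \<and> t \<noteq> \<tau>"
    unfolding eventually_at
    by (intro exI[of _ \<tau>]) (use assms in \<open>auto simp: dist_real_def\<close>)
  show "\<forall>\<^sub>F t in at \<tau>. min (?b1 t) (?b2 t) \<le> (moreau l x t - moreau l x \<tau>) / (t - \<tau>)"
    using ev by eventually_elim (use quot_between[OF assms] in blast)
  show "\<forall>\<^sub>F t in at \<tau>. (moreau l x t - moreau l x \<tau>) / (t - \<tau>) \<le> max (?b1 t) (?b2 t)"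
    using ev by eventually_elim (use quot_between[OF assms] in blast)
  have lim: "(?b1 \<longlongrightarrow> - ((x - pm x \<tau>) / \<tau>)\<^sup>2 / 2) (at \<tau>)"
    "(?b2 \<longlongrightarrow> - ((x - pm x \<tau>) / \<tau>)\<^sup>2 / 2) (at \<tau>)"
  proof -
    have e: "- ((x - pm x \<tau>) / \<tau>)\<^sup>2 / 2 = - (x - pm x \<tau>)\<^sup>2 / (2 * \<tau> * \<tau>)"
      using assms by (simp add: field_simps power2_eq_square)
    show "(?b1 \<longlongrightarrow> - ((x - pm x \<tau>) / \<tau>)\<^sup>2 / 2) (at \<tau>)" unfolding e
      by (rule tendsto_eq_intros refl | use assms in simp)+
    show "(?b2 \<longlongrightarrow> - ((x - pm x \<tau>) / \<tau>)\<^sup>2 / 2) (at \<tau>)" unfolding e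
      by (rule tendsto_eq_intros refl pm_tendsto[OF assms] | use assms in simp)+
  qed
  show "((\<lambda>t. min (?b1 t) (?b2 t)) \<longlongrightarrow> - ((x - pm x \<tau>) / \<tau>)\<^sup>2 / 2) (at \<tau>)"
    using tendsto_min[OF lim] by simp
  show "((\<lambda>t. max (?b1 t) (?b2 t)) \<longlongrightarrow> - ((x - pm x \<tau>) / \<tau>)\<^sup>2 / 2) (at \<tau>)"
    using tendsto_max[OF lim] by simp
qed

lemma quot_bound:
  assumes "\<tau> > 0" "\<tau> / 2 \<le> \<tau>'" "\<tau>' \<le> 2 * \<tau>" "\<tau>' \<noteq> \<tau>" "g \<in> subdiff l x"
  shows "\<bar>(moreau l x \<tau>' - moreau l x \<tau>) / (\<tau>' - \<tau>)\<bar> \<le> 4 * g\<^sup>2"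
proof -
  have t': "\<tau>' > 0" using assms by simp
  have A1: "(x - pm x \<tau>)\<^sup>2 \<le> (\<tau> * \<bar>g\<bar>)\<^sup>2"
    using pm_bound[OF assms(1,5)] by (metis abs_ge_zero power2_abs power_mono)
  have A2: "(x - pm x \<tau>')\<^sup>2 \<le> (\<tau>' * \<bar>g\<bar>)\<^sup>2"
    using pm_bound[OF t' assms(5)] by (metis abs_ge_zero power2_abs power_mono)
  have A1': "(x - pm x \<tau>)\<^sup>2 \<le> \<tau>\<^sup>2 * g\<^sup>2" using A1 by (simp add: power_mult_distrib)
  have A2': "(x - pm x \<tau>')\<^sup>2 \<le> \<tau>'\<^sup>2 * g\<^sup>2" using A2 by (simp add: power_mult_distrib)
  have "\<tau>'\<^sup>2 \<le> (2 * \<tau>)\<^sup>2" using assms t' by (intro power_mono) auto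
  then have "\<tau>'\<^sup>2 * g\<^sup>2 \<le> 4 * \<tau>\<^sup>2 * g\<^sup>2" by (intro mult_right_mono) (auto simp: power_mult_distrib)
  moreover have "0 \<le> \<tau>\<^sup>2 * g\<^sup>2" by simp
  ultimately have A: "(x - pm x \<tau>)\<^sup>2 \<le> 4 * \<tau>\<^sup>2 * g\<^sup>2" "(x - pm x \<tau>')\<^sup>2 \<le> 4 * \<tau>\<^sup>2 * g\<^sup>2"
    using A1' A2' by linarith+
  have den: "2 * \<tau> * \<tau>' \<ge> \<tau>\<^sup>2" using assms by (simp add: power2_eq_square)
  have "\<bar>- (x - pm x t)\<^sup>2 / (2 * \<tau> * \<tau>')\<bar> \<le> 4 * g\<^sup>2" if "(x - pm x t)\<^sup>2 \<le> 4 * \<tau>\<^sup>2 * g\<^sup>2" for t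
  proof -
    have "(x - pm x t)\<^sup>2 / (2 * \<tau> * \<tau>') \<le> 4 * \<tau>\<^sup>2 * g\<^sup>2 / \<tau>\<^sup>2"
      using that den assms t' by (intro frac_le) auto
    also have "\<dots> = 4 * g\<^sup>2" using assms by simp
    finally show ?thesis using assms t' by simp
  qed
  from this[OF A(1)] this[OF A(2)]
  show ?thesis by (rule minmax_abs[OF quot_between[OF assms(1) t' assms(4), of x]])
qed

lemma mo_at_right0: "((\<lambda>\<tau>. moreau l x \<tau>) \<longlongrightarrow> l x) (at_right 0)"
proof (rule tendsto_sandwich)
  show "\<forall>\<^sub>F \<tau> in at_right 0. l x - \<tau> * (rd x)\<^sup>2 / 2 \<le> moreau l x \<tau>"
    using eventually_at_right_less[of 0] by eventually_elim (rule mo_lower[OF _ rd_subdiff])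
  show "\<forall>\<^sub>F \<tau> in at_right 0. moreau l x \<tau> \<le> l x"
    using eventually_at_right_less[of 0] by eventually_elim (rule mo_le_l)
  show "((\<lambda>\<tau>. l x - \<tau> * (rd x)\<^sup>2 / 2) \<longlongrightarrow> l x) (at_right 0)"
    by (rule tendsto_eq_intros refl | simp)+
qed simp

lemma mo_at_top:
  assumes "l v0 = 0"
  shows "((\<lambda>\<tau>. moreau l x \<tau>) \<longlongrightarrow> 0) at_top"
proof (rule tendsto_sandwich)
  show "\<forall>\<^sub>F \<tau> in at_top. 0 \<le> moreau l x \<tau>"
    using eventually_gt_at_top[of 0] by eventually_elim (rule mo_nonneg)
  show "\<forall>\<^sub>F \<tau> in at_top. moreau l x \<tau> \<le> (x - v0)\<^sup>2 / 2 * inverse \<tau>"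
    using eventually_gt_at_top[of 0] by eventually_elim (use mo_le[of _ x v0] assms in \<open>simp add: phi_def field_simps\<close>)
  show "((\<lambda>\<tau>. (x - v0)\<^sup>2 / 2 * inverse \<tau>) \<longlongrightarrow> 0) at_top"
    by (intro tendsto_mult_right_zero tendsto_inverse_0_at_top filterlim_ident)
qed simp

end

lemma aux_sq: "\<bar>g\<bar> * \<bar>a\<bar> + \<bar>g\<bar> * \<bar>b\<bar> \<le> g\<^sup>2 + a\<^sup>2 + (b::real)\<^sup>2"
proof -
  have "0 \<le> (\<bar>g\<bar> - \<bar>a\<bar>)\<^sup>2" "0 \<le> (\<bar>g\<bar> - \<bar>b\<bar>)\<^sup>2" "0 \<le> a\<^sup>2" "0 \<le> b\<^sup>2" "0 \<le> g\<^sup>2" by simp_all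
  moreover have "(\<bar>g\<bar> - \<bar>a\<bar>)\<^sup>2 = g\<^sup>2 + a\<^sup>2 - 2 * (\<bar>g\<bar> * \<bar>a\<bar>)" "(\<bar>g\<bar> - \<bar>b\<bar>)\<^sup>2 = g\<^sup>2 + b\<^sup>2 - 2 * (\<bar>g\<bar> * \<bar>b\<bar>)"
    by (simp_all add: power2_diff power2_abs)
  ultimately show ?thesis by linarith
qed

lemma gauss_prob: "prob_space gauss"
  unfolding gauss_def by (rule prob_space_normal_density) simp

lemma sets_gauss: "sets gauss = sets borel"
  unfolding gauss_def by simp

locale stp = cvx +
  fixes PZ :: "real measure"
  assumes PZ: "prob_space PZ" and sPZ: "sets PZ = sets borel"
    and minzero: "\<exists>v. l v = 0"
    and moment: "\<And>c. (\<integral>\<^sup>+p. ennreal ((dplus l (c * snd p + fst p))\<^sup>2) \<partial>ZG PZ) < \<infinity>"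
begin

abbreviation "M \<equiv> ZG PZ"

lemma pair_ps: "pair_prob_space PZ gauss"
proof -
  interpret A: prob_space PZ by (rule PZ)
  interpret B: prob_space gauss by (rule gauss_prob)
  show ?thesis by unfold_locales
qed

lemma M_prob: "prob_space M"
proof -
  interpret pair_prob_space PZ gauss by (rule pair_ps)
  show ?thesis unfolding ZG_def by (rule prob_space_axioms)
qed

lemma sets_M: "sets M = sets (borel \<Otimes>\<^sub>M borel)"
  unfolding ZG_def by (rule sets_pair_measure_cong[OF sPZ sets_gauss])

lemma space_M: "space M = UNIV"
  using sets_eq_imp_space_eq[OF sets_M] by (simp add: space_pair_measure)

lemma space_PZ: "space PZ = UNIV"
  using sets_eq_imp_space_eq[OF sPZ] by simp

lemma measM: "f \<in> borel_measurable (borel \<Otimes>\<^sub>M borel) \<Longrightarrow> f \<in> borel_measurable M"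
  using measurable_cong_sets[OF sets_M refl] by blast

lemma measPZ: "f \<in> borel_measurable borel \<Longrightarrow> f \<in> borel_measurable PZ"
  using measurable_cong_sets[OF sPZ refl] by blast

lemma distr_fst: "distr M PZ fst = PZ"
proof -
  interpret B: prob_space gauss by (rule gauss_prob)
  show ?thesis unfolding ZG_def by (rule B.distr_pair_fst)
qed

lemma distr_snd: "distr M gauss snd = gauss"
proof -
  interpret pair_sigma_finite PZ gauss
    using pair_ps unfolding pair_prob_space_def by simp
  interpret A: prob_space PZ by (rule PZ)
  have "distr M gauss snd = distr (distr (gauss \<Otimes>\<^sub>M PZ) (PZ \<Otimes>\<^sub>M gauss) (\<lambda>(x, y). (y, x))) gauss snd"
    unfolding ZG_def by (subst distr_pair_swap) simp
  also have "\<dots> = distr (gauss \<Otimes>\<^sub>M PZ) gauss (snd \<circ> (\<lambda>(x, y). (y, x)))"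
    by (subst distr_distr) auto
  also have "snd \<circ> (\<lambda>(x, y). (y, x)) = (fst :: real \<times> real \<Rightarrow> real)" by auto
  also have "distr (gauss \<Otimes>\<^sub>M PZ) gauss fst = gauss" by (rule A.distr_pair_fst)
  finally show ?thesis .
qed

lemma int_fst:
  fixes h :: "real \<Rightarrow> real"
  assumes "h \<in> borel_measurable borel"
  shows "integrable M (\<lambda>p. h (fst p)) \<longleftrightarrow> integrable PZ h"
    and "(\<integral>p. h (fst p) \<partial>M) = (\<integral>z. h z \<partial>PZ)"
    and "(\<integral>\<^sup>+p. ennreal (h (fst p)) \<partial>M) = (\<integral>\<^sup>+z. ennreal (h z) \<partial>PZ)"
proof -
  have m: "fst \<in> measurable M PZ" unfolding ZG_def by simp
  have h: "h \<in> borel_measurable PZ" by (rule measPZ[OF assms])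
  show "integrable M (\<lambda>p. h (fst p)) \<longleftrightarrow> integrable PZ h"
    using integrable_distr_eq[OF m h] distr_fst by simp
  show "(\<integral>p. h (fst p) \<partial>M) = (\<integral>z. h z \<partial>PZ)"
    using integral_distr[OF m h] distr_fst by simp
  show "(\<integral>\<^sup>+p. ennreal (h (fst p)) \<partial>M) = (\<integral>\<^sup>+z. ennreal (h z) \<partial>PZ)"
    using nn_integral_distr[OF m, of "\<lambda>z. ennreal (h z)"] h distr_fst by simp
qed

lemma int_snd:
  fixes h :: "real \<Rightarrow> real"
  assumes "h \<in> borel_measurable borel"
  shows "integrable M (\<lambda>p. h (snd p)) \<longleftrightarrow> integrable gauss h"
proof -
  have m: "snd \<in> measurable M gauss" unfolding ZG_def by simp
  have h: "h \<in> borel_measurable gauss" using measurable_cong_sets[OF sets_gauss refl] assms by blast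
  show ?thesis using integrable_distr_eq[OF m h] distr_snd by simp
qed

lemma int_g2: "integrable M (\<lambda>p. (snd p)\<^sup>2)"
proof -
  have "integrable gauss (\<lambda>x. x\<^sup>2)"
    unfolding gauss_def
    by (subst integrable_density) (auto simp: normal_density_nonneg intro: integrable_std_normal_moment)
  then show ?thesis by (subst int_snd) auto
qed

lemma rd_le_dplus_sq: "ennreal ((rd v)\<^sup>2) \<le> ennreal ((dplus l v)\<^sup>2)"
  by (rule ennreal_leI[OF rd_sq_le])

lemma int_rd2: "integrable M (\<lambda>p. (rd (c * snd p + fst p))\<^sup>2)"
proof (rule integrableI_bounded)
  show "(\<lambda>p. (rd (c * snd p + fst p))\<^sup>2) \<in> borel_measurable M"
    by (intro measM) measurable
  have "(\<integral>\<^sup>+p. ennreal (norm ((rd (c * snd p + fst p))\<^sup>2)) \<partial>M)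
      \<le> (\<integral>\<^sup>+p. ennreal ((dplus l (c * snd p + fst p))\<^sup>2) \<partial>M)"
    by (intro nn_integral_mono) (simp add: rd_le_dplus_sq)
  also have "\<dots> < \<infinity>" by (rule moment)
  finally show "(\<integral>\<^sup>+p. ennreal (norm ((rd (c * snd p + fst p))\<^sup>2)) \<partial>M) < \<infinity>" .
qed

lemma int_rdz2: "integrable M (\<lambda>p. (rd (fst p))\<^sup>2)"
  using int_rd2[of 0] by simp

definition W :: "real \<Rightarrow> real \<times> real \<Rightarrow> real" where
  "W c p = (snd p)\<^sup>2 + (rd (c * snd p + fst p))\<^sup>2 + (rd (fst p))\<^sup>2"

lemma int_W: "integrable M (W c)"
  unfolding W_def by (rule Bochner_Integration.integrable_add[OF Bochner_Integration.integrable_add[OF int_g2 int_rd2] int_rdz2])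

lemma W_nonneg: "W c p \<ge> 0"
  unfolding W_def by simp

lemma l_diff_bound: "\<bar>l (c * g + z) - l z\<bar> \<le> \<bar>c\<bar> * (g\<^sup>2 + (rd (c * g + z))\<^sup>2 + (rd z)\<^sup>2)"
proof -
  define x where "x = c * g + z"
  have a: "l x - l z \<le> rd x * (x - z)"
    using rd_subdiff[of x] unfolding subdiff_def by (auto dest: spec[of _ z] simp: algebra_simps)
  have b: "l z - l x \<le> rd z * (z - x)"
    using rd_subdiff[of z] unfolding subdiff_def by (auto dest: spec[of _ x] simp: algebra_simps)
  have xz: "x - z = c * g" unfolding x_def by simp
  have "\<bar>l x - l z\<bar> \<le> \<bar>c * g\<bar> * (\<bar>rd x\<bar> + \<bar>rd z\<bar>)"
  proof -
    have "rd x * (x - z) \<le> \<bar>c * g\<bar> * \<bar>rd x\<bar>" unfolding xz by (metis abs_ge_self abs_mult mult.commute)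
    moreover have "rd z * (z - x) \<le> \<bar>c * g\<bar> * \<bar>rd z\<bar>"
      using xz by (metis abs_ge_self abs_minus_commute abs_mult mult.commute)
    ultimately have a2: "l x - l z \<le> \<bar>c * g\<bar> * \<bar>rd x\<bar>" and b2: "l z - l x \<le> \<bar>c * g\<bar> * \<bar>rd z\<bar>"
      using a b by linarith+
    have "0 \<le> \<bar>c * g\<bar> * \<bar>rd x\<bar>" "0 \<le> \<bar>c * g\<bar> * \<bar>rd z\<bar>" by simp_all
    then show ?thesis using a2 b2 unfolding distrib_left abs_le_iff by linarith
  qed
  also have "\<dots> = \<bar>c\<bar> * (\<bar>g\<bar> * \<bar>rd x\<bar> + \<bar>g\<bar> * \<bar>rd z\<bar>)" by (simp add: abs_mult algebra_simps)
  also have "\<dots> \<le> \<bar>c\<bar> * (g\<^sup>2 + (rd x)\<^sup>2 + (rd z)\<^sup>2)"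
    by (rule mult_left_mono[OF aux_sq]) simp
  finally show ?thesis unfolding x_def .
qed

lemma mo_l_bound: "\<tau> > 0 \<Longrightarrow> \<bar>moreau l x \<tau> - l x\<bar> \<le> \<tau> * (rd x)\<^sup>2 / 2"
  using mo_lower[OF _ rd_subdiff, of \<tau> x] mo_le_l[of \<tau> x] by (simp add: abs_le_iff)

lemma meas_F[measurable]: "\<tau> > 0 \<Longrightarrow> (\<lambda>p. moreau l (c * snd p + fst p) \<tau> - l (fst p)) \<in> borel_measurable M"
  by (intro measM) measurable

lemma meas_lx[measurable]: "(\<lambda>p. l (c * snd p + fst p)) \<in> borel_measurable M"
  by (intro measM) measurable

lemma meas_lz[measurable]: "(\<lambda>p. l (fst p)) \<in> borel_measurable M"
  by (intro measM) measurable

lemma meas_mo[measurable]: "\<tau> > 0 \<Longrightarrow> (\<lambda>p. moreau l (c * snd p + fst p) \<tau>) \<in> borel_measurable M"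
  by (intro measM) measurable

lemma int_ldiff: "integrable M (\<lambda>p. l (c * snd p + fst p) - l (fst p))"
proof (rule Bochner_Integration.integrable_bound[OF integrable_mult_right[of "\<bar>c\<bar>" M "W c", OF int_W]])
  show "(\<lambda>p. l (c * snd p + fst p) - l (fst p)) \<in> borel_measurable M" by measurable
  show "AE p in M. norm (l (c * snd p + fst p) - l (fst p)) \<le> norm (\<bar>c\<bar> * W c p)"
    using l_diff_bound W_nonneg unfolding W_def by (auto simp: abs_mult)
qed

lemma int_mo_l: "\<tau> > 0 \<Longrightarrow> integrable M (\<lambda>p. moreau l (c * snd p + fst p) \<tau> - l (c * snd p + fst p))"
proof (rule Bochner_Integration.integrable_bound[OF integrable_mult_right[of "\<tau> / 2" M "\<lambda>p. (rd (c * snd p + fst p))\<^sup>2", OF int_rd2]])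
  assume "\<tau> > 0"
  then show "(\<lambda>p. moreau l (c * snd p + fst p) \<tau> - l (c * snd p + fst p)) \<in> borel_measurable M"
    by measurable
  show "AE p in M. norm (moreau l (c * snd p + fst p) \<tau> - l (c * snd p + fst p))
      \<le> norm (\<tau> / 2 * (rd (c * snd p + fst p))\<^sup>2)"
    using mo_l_bound \<open>\<tau> > 0\<close> by auto
qed

lemma int_F:
  assumes "\<tau> > 0"
  shows "integrable M (\<lambda>p. moreau l (c * snd p + fst p) \<tau> - l (fst p))"
proof -
  have "integrable M (\<lambda>p. (moreau l (c * snd p + fst p) \<tau> - l (c * snd p + fst p)) + (l (c * snd p + fst p) - l (fst p)))"
    by (rule Bochner_Integration.integrable_add[OF int_mo_l[OF assms] int_ldiff])
  then show ?thesis by simp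
qed

lemma Lfun_split: "\<tau> > 0 \<Longrightarrow> Lfun l PZ c \<tau> =
    (\<integral>p. (moreau l (c * snd p + fst p) \<tau> - l (c * snd p + fst p)) \<partial>M)
    + (\<integral>p. (l (c * snd p + fst p) - l (fst p)) \<partial>M)"
  unfolding Lfun_def
proof -
  assume t: "\<tau> > 0"
  have "(\<integral>p. (moreau l (c * snd p + fst p) \<tau> - l (fst p)) \<partial>M) =
      (\<integral>p. ((moreau l (c * snd p + fst p) \<tau> - l (c * snd p + fst p)) + (l (c * snd p + fst p) - l (fst p))) \<partial>M)"
    by simp
  also have "\<dots> = (\<integral>p. (moreau l (c * snd p + fst p) \<tau> - l (c * snd p + fst p)) \<partial>M)
    + (\<integral>p. (l (c * snd p + fst p) - l (fst p)) \<partial>M)"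
    by (rule Bochner_Integration.integral_add[OF int_mo_l[OF t] int_ldiff])
  finally show "(\<integral>p. (moreau l (c * snd p + fst p) \<tau> - l (fst p)) \<partial>M) = (\<integral>p. (moreau l (c * snd p + fst p) \<tau> - l (c * snd p + fst p)) \<partial>M)
    + (\<integral>p. (l (c * snd p + fst p) - l (fst p)) \<partial>M)" .
qed

end

lemma dc_within:
  fixes f :: "real \<Rightarrow> 'a \<Rightarrow> real"
  assumes meas: "\<And>t. t \<in> S \<Longrightarrow> f t \<in> borel_measurable N"
    and gm: "g \<in> borel_measurable N" and w: "integrable N w"
    and d: "d > 0"
    and bound: "\<And>t x. t \<in> S \<Longrightarrow> t \<noteq> a \<Longrightarrow> dist t a < d \<Longrightarrow> x \<in> space N \<Longrightarrow> \<bar>f t x\<bar> \<le> w x"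
    and lim: "\<And>x. x \<in> space N \<Longrightarrow> ((\<lambda>t. f t x) \<longlongrightarrow> g x) (at a within S)"
  shows "((\<lambda>t. \<integral>x. f t x \<partial>N) \<longlongrightarrow> (\<integral>x. g x \<partial>N)) (at a within S)"
proof (subst tendsto_at_iff_sequentially, intro allI impI)
  fix X assume X: "\<forall>i. X i \<in> S - {a}" "X \<longlonglongrightarrow> a"
  then obtain K where K: "\<And>n. n \<ge> K \<Longrightarrow> dist (X n) a < d"
    using d unfolding lim_sequentially by blast
  have X': "\<forall>i. X (i + K) \<in> S - {a}" "(\<lambda>i. X (i + K)) \<longlonglongrightarrow> a"
    using X LIMSEQ_ignore_initial_segment[OF X(2), of K] by auto
  show "((\<lambda>t. \<integral>x. f t x \<partial>N) \<circ> X) \<longlonglongrightarrow> (\<integral>x. g x \<partial>N)"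
    unfolding comp_def
  proof (rule LIMSEQ_offset[where k=K], rule integral_dominated_convergence[where w=w])
    show "(\<lambda>x. f (X (n + K)) x) \<in> borel_measurable N" for n using meas X by auto
    show "AE x in N. (\<lambda>n. f (X (n + K)) x) \<longlonglongrightarrow> g x"
    proof (rule AE_I2)
      fix x assume "x \<in> space N"
      from lim[OF this] have h: "\<forall>X. (\<forall>i. X i \<in> S - {a}) \<longrightarrow> X \<longlonglongrightarrow> a \<longrightarrow> (\<lambda>i. f (X i) x) \<longlonglongrightarrow> g x"
        unfolding tendsto_at_iff_sequentially comp_def .
      show "(\<lambda>n. f (X (n + K)) x) \<longlonglongrightarrow> g x"
        using spec[OF h, of "\<lambda>i. X (i + K)"] X' by simp
    qed
    show "AE x in N. norm (f (X (n + K)) x) \<le> w x" for n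
      using X K[of "n + K"] by (intro AE_I2) (auto intro!: bound)
  qed (use gm w in auto)
qed

lemma dc_top:
  fixes f :: "real \<Rightarrow> 'a \<Rightarrow> real"
  assumes meas: "\<And>t. t \<ge> T \<Longrightarrow> f t \<in> borel_measurable N"
    and gm: "g \<in> borel_measurable N" and w: "integrable N w"
    and bound: "\<And>t x. t \<ge> T \<Longrightarrow> x \<in> space N \<Longrightarrow> \<bar>f t x\<bar> \<le> w x"
    and lim: "\<And>x. x \<in> space N \<Longrightarrow> ((\<lambda>t. f t x) \<longlongrightarrow> g x) at_top"
  shows "((\<lambda>t. \<integral>x. f t x \<partial>N) \<longlongrightarrow> (\<integral>x. g x \<partial>N)) at_top"
proof -
  have ev: "\<forall>\<^sub>F t in at_top. max t T = t" using eventually_ge_at_top[of T]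
    by eventually_elim auto
  have "((\<lambda>t. \<integral>x. f (max t T) x \<partial>N) \<longlongrightarrow> (\<integral>x. g x \<partial>N)) at_top"
  proof (rule integral_dominated_convergence_at_top[OF gm _ w])
    show "f (max t T) \<in> borel_measurable N" for t using meas by auto
    show "AE x in N. ((\<lambda>t. f (max t T) x) \<longlongrightarrow> g x) at_top"
    proof (rule AE_I2)
      fix x assume x: "x \<in> space N"
      show "((\<lambda>t. f (max t T) x) \<longlongrightarrow> g x) at_top"
        by (rule tendsto_cong[THEN iffD1, OF _ lim[OF x]]) (use ev in \<open>eventually_elim, simp\<close>)
    qed
    show "\<forall>\<^sub>F t in at_top. AE x in N. norm (f (max t T) x) \<le> w x"
      by (intro always_eventually allI AE_I2) (auto intro!: bound)
  qed
  then show ?thesis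
    by (rule tendsto_cong[THEN iffD1, rotated]) (use ev in \<open>eventually_elim, simp\<close>)
qed

lemma pos_comb: "0 \<le> u \<Longrightarrow> 0 \<le> v \<Longrightarrow> u + v = 1 \<Longrightarrow> (a::real) > 0 \<Longrightarrow> b > 0 \<Longrightarrow> u * a + v * b > 0"
proof (cases "u = 0")
  case False
  assume "0 \<le> u" "0 \<le> v" "a > 0" "b > 0"
  then have "u * a > 0" "v * b \<ge> 0" using False by auto
  then show ?thesis by linarith
qed simp

lemma convex_halfplane: "convex {p :: real \<times> real. snd p > 0}"
  by (rule convexI) (auto intro: pos_comb)

lemma open_halfplane: "open {p :: real \<times> real. snd p > 0}"
  by (intro open_Collect_less continuous_intros)

context stp
begin

lemma Lfun_convex_pt:
  assumes "t1 > 0" "t2 > 0" "0 \<le> t" "t \<le> 1"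
  shows "Lfun l PZ ((1 - t) * c1 + t * c2) ((1 - t) * t1 + t * t2) \<le> (1 - t) * Lfun l PZ c1 t1 + t * Lfun l PZ c2 t2"
proof -
  have tt: "(1 - t) * t1 + t * t2 > 0" using pos_comb[of "1 - t" t t1 t2] assms by simp
  let ?F = "\<lambda>c \<tau> p. moreau l (c * snd p + fst p) \<tau> - l (fst p)"
  have "Lfun l PZ ((1 - t) * c1 + t * c2) ((1 - t) * t1 + t * t2) \<le> (\<integral>p. ((1 - t) * ?F c1 t1 p + t * ?F c2 t2 p) \<partial>M)"
    unfolding Lfun_def
  proof (rule integral_mono)
    show "integrable M (?F ((1 - t) * c1 + t * c2) ((1 - t) * t1 + t * t2))" by (rule int_F[OF tt])
    show "integrable M (\<lambda>p. (1 - t) * ?F c1 t1 p + t * ?F c2 t2 p)"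
      using int_F[OF assms(1), of c1] int_F[OF assms(2), of c2] by auto
    fix p :: "real \<times> real"
    have e: "((1 - t) * c1 + t * c2) * snd p + fst p = (1 - t) * (c1 * snd p + fst p) + t * (c2 * snd p + fst p)"
      by (simp add: algebra_simps)
    show "?F ((1 - t) * c1 + t * c2) ((1 - t) * t1 + t * t2) p \<le> (1 - t) * ?F c1 t1 p + t * ?F c2 t2 p"
      unfolding e using mo_convex[OF assms, of "c1 * snd p + fst p" "c2 * snd p + fst p"]
      by (simp add: algebra_simps)
  qed
  also have "\<dots> = (1 - t) * Lfun l PZ c1 t1 + t * Lfun l PZ c2 t2"
    unfolding Lfun_def
    using int_F[OF assms(1), of c1] int_F[OF assms(2), of c2] by simp
  finally show ?thesis .
qed

lemma Lfun_convex: "convex_on {p :: real \<times> real. snd p > 0} (\<lambda>p. Lfun l PZ (fst p) (snd p))"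
proof (rule convex_onI[OF _ convex_halfplane])
  fix t :: real and x y :: "real \<times> real"
  assume "0 < t" "t < 1" "x \<in> {p. snd p > 0}" "y \<in> {p. snd p > 0}"
  then show "Lfun l PZ (fst ((1 - t) *\<^sub>R x + t *\<^sub>R y)) (snd ((1 - t) *\<^sub>R x + t *\<^sub>R y))
      \<le> (1 - t) * Lfun l PZ (fst x) (snd x) + t * Lfun l PZ (fst y) (snd y)"
    using Lfun_convex_pt[of "snd x" "snd y" t "fst x" "fst y"] by simp
qed

lemma Lfun_cont: "continuous_on {p :: real \<times> real. snd p > 0} (\<lambda>p. Lfun l PZ (fst p) (snd p))"
  by (rule convex_on_continuous[OF open_halfplane Lfun_convex])

lemma Lfun_at_right0:
  "((\<lambda>\<tau>. Lfun l PZ c \<tau>) \<longlongrightarrow> (\<integral>p. (l (c * snd p + fst p) - l (fst p)) \<partial>M)) (at_right 0)"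
  unfolding Lfun_def
proof (rule dc_within[where d=1 and w="\<lambda>p. (rd (c * snd p + fst p))\<^sup>2 / 2 + \<bar>c\<bar> * W c p"])
  show "(\<lambda>p. moreau l (c * snd p + fst p) t - l (fst p)) \<in> borel_measurable M" if "t \<in> {0<..}" for t
    by (rule meas_F) (use that in simp)
  show "(\<lambda>p. l (c * snd p + fst p) - l (fst p)) \<in> borel_measurable M" by measurable
  show "integrable M (\<lambda>p. (rd (c * snd p + fst p))\<^sup>2 / 2 + \<bar>c\<bar> * W c p)"
    using int_rd2[of c] int_W[of c] by auto
  fix t :: real and p :: "real \<times> real" assume t: "t \<in> {0<..}" "t \<noteq> 0" "dist t 0 < 1"
  then have t': "0 < t" "t < 1" by (auto simp: dist_real_def)
  have "\<bar>moreau l (c * snd p + fst p) t - l (c * snd p + fst p)\<bar> \<le> t * (rd (c * snd p + fst p))\<^sup>2 / 2"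
    by (rule mo_l_bound[OF t'(1)])
  also have "\<dots> \<le> (rd (c * snd p + fst p))\<^sup>2 / 2" using t' by (simp add: mult_left_le_one_le)
  finally have a: "\<bar>moreau l (c * snd p + fst p) t - l (c * snd p + fst p)\<bar> \<le> (rd (c * snd p + fst p))\<^sup>2 / 2" .
  have b: "\<bar>l (c * snd p + fst p) - l (fst p)\<bar> \<le> \<bar>c\<bar> * W c p"
    using l_diff_bound unfolding W_def by simp
  show "\<bar>moreau l (c * snd p + fst p) t - l (fst p)\<bar> \<le> (rd (c * snd p + fst p))\<^sup>2 / 2 + \<bar>c\<bar> * W c p"
    using a b by linarith
next
  fix p :: "real \<times> real"
  show "((\<lambda>t. moreau l (c * snd p + fst p) t - l (fst p)) \<longlongrightarrow> l (c * snd p + fst p) - l (fst p)) (at_right 0)"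
    by (intro tendsto_diff mo_at_right0 tendsto_const)
qed simp

lemma Lfun0_at_right0: "((\<lambda>\<tau>. Lfun l PZ 0 \<tau>) \<longlongrightarrow> 0) (at_right 0)"
  using Lfun_at_right0[of 0] by simp

lemma nn_lz_M: "(\<integral>\<^sup>+p. ennreal (l (fst p)) \<partial>M) = (\<integral>\<^sup>+z. ennreal (l z) \<partial>PZ)"
  by (rule int_fst(3)) measurable

lemma Lfun_lower: "\<tau> > 0 \<Longrightarrow> ereal (Lfun l PZ c \<tau>) \<ge> - enn2ereal (\<integral>\<^sup>+z. ennreal (l z) \<partial>PZ)"
proof (cases "(\<integral>\<^sup>+z. ennreal (l z) \<partial>PZ) = \<infinity>")
  case False
  assume t: "\<tau> > 0"
  have intz: "integrable M (\<lambda>p. l (fst p))"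
  proof (rule integrableI_bounded)
    show "(\<lambda>p. l (fst p)) \<in> borel_measurable M" by measurable
    show "(\<integral>\<^sup>+p. ennreal (norm (l (fst p))) \<partial>M) < \<infinity>"
      using False nn_lz_M nonneg by (simp add: top.not_eq_extremum)
  qed
  have eq: "(\<integral>\<^sup>+z. ennreal (l z) \<partial>PZ) = ennreal (\<integral>p. l (fst p) \<partial>M)"
    using nn_lz_M nn_integral_eq_integral[OF intz] nonneg by simp
  have intm: "integrable M (\<lambda>p. moreau l (c * snd p + fst p) \<tau>)"
    using Bochner_Integration.integrable_add[OF int_F[OF t, of c] intz] by simp
  have "Lfun l PZ c \<tau> = (\<integral>p. moreau l (c * snd p + fst p) \<tau> \<partial>M) - (\<integral>p. l (fst p) \<partial>M)"
    unfolding Lfun_def by (rule Bochner_Integration.integral_diff[OF intm intz])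
  moreover have "(\<integral>p. moreau l (c * snd p + fst p) \<tau> \<partial>M) \<ge> 0"
    using mo_nonneg[OF t] by (intro integral_nonneg_AE) auto
  moreover have "(\<integral>p. l (fst p) \<partial>M) \<ge> 0" using nonneg by (intro integral_nonneg_AE) auto
  ultimately show ?thesis unfolding eq by simp
qed simp

end

context stp
begin

definition dd :: "real \<Rightarrow> real \<Rightarrow> real" where
  "dd z \<tau> = - ((z - pm z \<tau>) / \<tau>)\<^sup>2 / 2"

lemma quot_lim:
  assumes "\<tau> > 0"
  shows "((\<lambda>t. (moreau l z t - moreau l z \<tau>) / (t - \<tau>)) \<longlongrightarrow> dd z \<tau>) (at \<tau>)"
  using mo_deriv[OF assms, of z] unfolding has_field_derivative_iff dd_def .

lemma dd_meas[measurable]: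
  assumes "\<tau> > 0"
  shows "(\<lambda>z. dd z \<tau>) \<in> borel_measurable borel"
proof -
  define X where "X n = \<tau> + \<tau> / real (n + 2)" for n
  have X: "X n > 0" "X n \<noteq> \<tau>" for n unfolding X_def using assms by (auto simp: add_pos_pos)
  have XL: "X \<longlonglongrightarrow> \<tau>"
    unfolding X_def using tendsto_add[OF tendsto_const LIMSEQ_ignore_initial_segment[OF lim_const_over_n[of \<tau>], of 2]]
    by simp
  show ?thesis
  proof (rule borel_measurable_LIMSEQ_real)
    fix z
    from quot_lim[OF assms, of z] X XL
    show "(\<lambda>n. (moreau l z (X n) - moreau l z \<tau>) / (X n - \<tau>)) \<longlonglongrightarrow> dd z \<tau>"
      unfolding tendsto_at_iff_sequentially comp_def by auto
  next
    fix n
    show "(\<lambda>z. (moreau l z (X n) - moreau l z \<tau>) / (X n - \<tau>)) \<in> borel_measurable borel"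
      using X(1)[of n] assms by measurable
  qed
qed

lemma dd_bound: "\<tau> > 0 \<Longrightarrow> \<bar>dd z \<tau>\<bar> \<le> (rd z)\<^sup>2 / 2"
proof -
  assume t: "\<tau> > 0"
  have "\<bar>z - pm z \<tau>\<bar> / \<tau> \<le> \<bar>rd z\<bar>"
    using pm_bound[OF t rd_subdiff, of z] t by (simp add: divide_le_eq mult.commute)
  then have "((z - pm z \<tau>) / \<tau>)\<^sup>2 \<le> (rd z)\<^sup>2"
    by (metis abs_divide abs_ge_zero abs_of_pos power2_abs power_mono t)
  then show ?thesis unfolding dd_def by simp
qed

lemma dd_nonpos: "dd z \<tau> \<le> 0" unfolding dd_def by simp

lemma dd_mono: "0 < \<tau> \<Longrightarrow> \<tau> \<le> \<tau>' \<Longrightarrow> dd z \<tau> \<le> dd z \<tau>'"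
  unfolding dd_def using pm_mono[of \<tau> \<tau>' z] by simp

definition DD :: "real \<Rightarrow> real" where
  "DD \<tau> = (\<integral>p. dd (fst p) \<tau> \<partial>M)"

lemma int_dd: "\<tau> > 0 \<Longrightarrow> integrable M (\<lambda>p. dd (fst p) \<tau>)"
proof (rule Bochner_Integration.integrable_bound[OF integrable_mult_right[of "1/2" M "\<lambda>p. (rd (fst p))\<^sup>2", OF int_rdz2]])
  assume t: "\<tau> > 0"
  then show "(\<lambda>p. dd (fst p) \<tau>) \<in> borel_measurable M" by (intro measM) measurable
  show "AE p in M. norm (dd (fst p) \<tau>) \<le> norm (1 / 2 * (rd (fst p))\<^sup>2)"
    using dd_bound[OF t] by auto
qed

lemma Lfun0_eq: "Lfun l PZ 0 t = (\<integral>p. (moreau l (fst p) t - l (fst p)) \<partial>M)"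
  unfolding Lfun_def by simp

lemma int_F0: "t > 0 \<Longrightarrow> integrable M (\<lambda>p. moreau l (fst p) t - l (fst p))"
  using int_F[of t 0] by simp

lemma Lfun0_deriv:
  assumes t: "\<tau> > 0"
  shows "((\<lambda>t. Lfun l PZ 0 t) has_real_derivative DD \<tau>) (at \<tau>)"
  unfolding has_field_derivative_iff
proof -
  have open_pos: "open {0::real<..}" by simp
  have eq: "(Lfun l PZ 0 t - Lfun l PZ 0 \<tau>) / (t - \<tau>) = (\<integral>p. (moreau l (fst p) t - moreau l (fst p) \<tau>) / (t - \<tau>) \<partial>M)"
    if "t \<in> {0<..}" for t
  proof -
    have "Lfun l PZ 0 t - Lfun l PZ 0 \<tau> = (\<integral>p. ((moreau l (fst p) t - l (fst p)) - (moreau l (fst p) \<tau> - l (fst p))) \<partial>M)"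
      unfolding Lfun0_eq using int_F0[of t] int_F0[OF t] that by (subst Bochner_Integration.integral_diff) auto
    then show ?thesis by simp
  qed
  have lim: "((\<lambda>t. \<integral>p. (moreau l (fst p) t - moreau l (fst p) \<tau>) / (t - \<tau>) \<partial>M) \<longlongrightarrow> DD \<tau>) (at \<tau> within {0<..})"
    unfolding DD_def
  proof (rule dc_within[where d="\<tau> / 2" and w="\<lambda>p. 4 * (rd (fst p))\<^sup>2"])
    show "(\<lambda>p. (moreau l (fst p) s - moreau l (fst p) \<tau>) / (s - \<tau>)) \<in> borel_measurable M" if "s \<in> {0<..}" for s
      using that t by (intro measM) measurable
    show "(\<lambda>p. dd (fst p) \<tau>) \<in> borel_measurable M" using t by (intro measM) measurable
    show "integrable M (\<lambda>p. 4 * (rd (fst p))\<^sup>2)" using int_rdz2 by auto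
    show "\<tau> / 2 > 0" using t by simp
  next
    fix s :: real and p :: "real \<times> real"
    assume s: "s \<in> {0<..}" "s \<noteq> \<tau>" "dist s \<tau> < \<tau> / 2"
    then have "\<bar>s - \<tau>\<bar> < \<tau> / 2" by (simp add: dist_real_def)
    then have "\<tau> / 2 \<le> s" "s \<le> 2 * \<tau>" using abs_less_iff[of "s - \<tau>" "\<tau> / 2"] by linarith+
    then show "\<bar>(moreau l (fst p) s - moreau l (fst p) \<tau>) / (s - \<tau>)\<bar> \<le> 4 * (rd (fst p))\<^sup>2"
      using quot_bound[OF t _ _ s(2) rd_subdiff] by simp
  next
    fix p :: "real \<times> real"
    show "((\<lambda>s. (moreau l (fst p) s - moreau l (fst p) \<tau>) / (s - \<tau>)) \<longlongrightarrow> dd (fst p) \<tau>) (at \<tau> within {0<..})"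
      using quot_lim[OF t] by (rule tendsto_within_subset) simp
  qed
  have "((\<lambda>t. (Lfun l PZ 0 t - Lfun l PZ 0 \<tau>) / (t - \<tau>)) \<longlongrightarrow> DD \<tau>) (at \<tau> within {0<..})"
  proof -
    have ev: "\<forall>\<^sub>F t in at \<tau> within {0<..}. (Lfun l PZ 0 t - Lfun l PZ 0 \<tau>) / (t - \<tau>)
        = (\<integral>p. (moreau l (fst p) t - moreau l (fst p) \<tau>) / (t - \<tau>) \<partial>M)"
      unfolding eventually_at_filter by (intro always_eventually allI impI eq; assumption)
    show ?thesis by (rule tendsto_cong[THEN iffD2, OF ev lim])
  qed
  then show "((\<lambda>t. (Lfun l PZ 0 t - Lfun l PZ 0 \<tau>) / (t - \<tau>)) \<longlongrightarrow> DD \<tau>) (at \<tau>)"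
    using at_within_open[OF _ open_pos, of \<tau>] t by simp
qed

lemma DD_mono: "0 < \<tau> \<Longrightarrow> \<tau> \<le> \<tau>' \<Longrightarrow> DD \<tau> \<le> DD \<tau>'"
  unfolding DD_def by (intro integral_mono int_dd dd_mono) auto

lemma DD_nonpos: "DD \<tau> \<le> 0"
proof -
  have "0 \<le> (\<integral>p. - dd (fst p) \<tau> \<partial>M)" using dd_nonpos by (intro integral_nonneg_AE) (auto simp: le_minus_iff)
  then show ?thesis unfolding DD_def by simp
qed

lemma DD_lb: "\<tau> > 0 \<Longrightarrow> - (\<integral>p. (rd (fst p))\<^sup>2 / 2 \<partial>M) \<le> DD \<tau>"
proof -
  assume t: "\<tau> > 0"
  have "(\<integral>p. - ((rd (fst p))\<^sup>2 / 2) \<partial>M) \<le> DD \<tau>"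
  proof -
    have b: "- ((rd z)\<^sup>2 / 2) \<le> dd z \<tau>" for z
      using dd_bound[OF t, of z] abs_ge_minus_self[of "dd z \<tau>"] by linarith
    show ?thesis
      unfolding DD_def using int_dd[OF t] int_rdz2 b
      by (intro integral_mono) auto
  qed
  then show ?thesis by simp
qed

lemma DD_lim: "\<exists>d. (DD \<longlongrightarrow> d) (at_right 0) \<and> d \<le> 0"
proof -
  define d where "d = Inf (DD ` {0<..})"
  have bdd: "bdd_below (DD ` {0<..})"
    using DD_lb by (intro bdd_belowI2) auto
  have dle: "d \<le> DD t" if "t > 0" for t unfolding d_def using bdd that by (intro cInf_lower) auto
  have "(DD \<longlongrightarrow> d) (at_right 0)"
  proof (rule order_tendstoI)
    fix a assume "a < d"
    then show "\<forall>\<^sub>F t in at_right 0. a < DD t"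
      unfolding eventually_at_right_field by (intro exI[of _ 1]) (use dle \<open>a < d\<close> in force)
  next
    fix a assume "d < a"
    then have "\<exists>t\<in>{0<..}. DD t < a"
      unfolding d_def using bdd by (subst (asm) cInf_less_iff) auto
    then obtain t0 where t0: "t0 > 0" "DD t0 < a" by auto
    show "\<forall>\<^sub>F t in at_right 0. DD t < a"
      unfolding eventually_at_right_field
    proof (intro exI[of _ t0] conjI allI impI)
      fix y :: real assume "y > 0" "y < t0"
      then have "DD y \<le> DD t0" by (intro DD_mono) auto
      then show "DD y < a" using t0 by simp
    qed (use t0 in simp)
  qed
  moreover have "d \<le> 0" using dle[of 1] DD_nonpos[of 1] by simp
  ultimately show ?thesis by blast
qed

lemma deriv_part: "\<exists>D d. (\<forall>\<tau>>0. ((\<lambda>t. Lfun l PZ 0 t) has_real_derivative D \<tau>) (at \<tau>))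
        \<and> (D \<longlongrightarrow> d) (at_right 0) \<and> d \<le> 0"
  using Lfun0_deriv DD_lim by blast

end

context stp
begin

lemma mo_anti:
  assumes "0 < \<tau>" "\<tau> \<le> \<tau>'"
  shows "moreau l x \<tau>' \<le> moreau l x \<tau>"
proof -
  have t': "\<tau>' > 0" using assms by simp
  have "0 \<le> (x - pm x \<tau>)\<^sup>2 * (\<tau>' - \<tau>) / (2 * \<tau> * \<tau>')"
    using assms t' by (intro divide_nonneg_pos mult_nonneg_nonneg) auto
  then show ?thesis using mo_diff_bounds(1)[OF assms(1) t', of x] by linarith
qed

lemma Lfun_div_top: "((\<lambda>\<tau>. Lfun l PZ c \<tau> / \<tau>) \<longlongrightarrow> 0) at_top"
proof -
  define K where "K = (\<integral>p. (l (c * snd p + fst p) - l (fst p)) \<partial>M)"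
  have h1: "((\<lambda>t. \<integral>p. (moreau l (c * snd p + fst p) t - l (c * snd p + fst p)) / t \<partial>M) \<longlongrightarrow> (\<integral>p. 0 \<partial>M)) at_top"
  proof (rule dc_top[where T=1 and w="\<lambda>p. (rd (c * snd p + fst p))\<^sup>2 / 2"])
    show "(\<lambda>p. (moreau l (c * snd p + fst p) t - l (c * snd p + fst p)) / t) \<in> borel_measurable M" if "1 \<le> t" for t
    proof -
      have "0 < t" using that by simp
      then show ?thesis by (intro measM) measurable
    qed
    show "integrable M (\<lambda>p. (rd (c * snd p + fst p))\<^sup>2 / 2)" using int_rd2[of c] by auto
  next
    fix t :: real and p :: "real \<times> real" assume t: "1 \<le> t"
    have "\<bar>moreau l (c * snd p + fst p) t - l (c * snd p + fst p)\<bar> \<le> t * (rd (c * snd p + fst p))\<^sup>2 / 2"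
      using mo_l_bound t by simp
    then show "\<bar>(moreau l (c * snd p + fst p) t - l (c * snd p + fst p)) / t\<bar> \<le> (rd (c * snd p + fst p))\<^sup>2 / 2"
      using t by (simp add: abs_div divide_le_eq mult.commute)
  next
    fix p :: "real \<times> real"
    obtain v0 where v0: "l v0 = 0" using minzero by auto
    have "((\<lambda>t. (moreau l (c * snd p + fst p) t - l (c * snd p + fst p)) * inverse t) \<longlongrightarrow> (0 - l (c * snd p + fst p)) * 0) at_top"
      by (intro tendsto_mult tendsto_diff mo_at_top[OF v0] tendsto_const tendsto_inverse_0_at_top filterlim_ident)
    then show "((\<lambda>t. (moreau l (c * snd p + fst p) t - l (c * snd p + fst p)) / t) \<longlongrightarrow> 0) at_top"
      by (simp add: divide_inverse)
  qed simp
  have h2: "((\<lambda>t. K * inverse t) \<longlongrightarrow> 0) at_top"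
    by (intro tendsto_mult_right_zero tendsto_inverse_0_at_top filterlim_ident)
  have ev: "\<forall>\<^sub>F t in at_top. (\<integral>p. (moreau l (c * snd p + fst p) t - l (c * snd p + fst p)) / t \<partial>M) + K * inverse t
      = Lfun l PZ c t / t"
    using eventually_gt_at_top[of 0]
  proof eventually_elim
    case (elim t)
    then show ?case using Lfun_split[OF elim, of c] unfolding K_def
      by (simp add: divide_inverse distrib_right)
  qed
  have "((\<lambda>t. (\<integral>p. (moreau l (c * snd p + fst p) t - l (c * snd p + fst p)) / t \<partial>M) + K * inverse t) \<longlongrightarrow> 0) at_top"
    using tendsto_add[OF h1 h2] by simp
  then show ?thesis by (rule tendsto_cong[THEN iffD1, OF ev])
qed

lemma intz_fin:
  assumes "(\<integral>\<^sup>+z. ennreal (l z) \<partial>PZ) \<noteq> \<infinity>"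
  shows "integrable M (\<lambda>p. l (fst p))"
    and "(\<integral>\<^sup>+z. ennreal (l z) \<partial>PZ) = ennreal (\<integral>p. l (fst p) \<partial>M)"
proof -
  show intz: "integrable M (\<lambda>p. l (fst p))"
  proof (rule integrableI_bounded)
    show "(\<lambda>p. l (fst p)) \<in> borel_measurable M" by measurable
    show "(\<integral>\<^sup>+p. ennreal (norm (l (fst p))) \<partial>M) < \<infinity>"
      using assms nn_lz_M nonneg by (simp add: top.not_eq_extremum)
  qed
  show "(\<integral>\<^sup>+z. ennreal (l z) \<partial>PZ) = ennreal (\<integral>p. l (fst p) \<partial>M)"
    using nn_lz_M nn_integral_eq_integral[OF intz] nonneg by simp
qed

lemma Lfun_top: "((\<lambda>\<tau>. ereal (Lfun l PZ c \<tau>)) \<longlongrightarrow> - enn2ereal (\<integral>\<^sup>+z. ennreal (l z) \<partial>PZ)) at_top"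
proof (cases "(\<integral>\<^sup>+z. ennreal (l z) \<partial>PZ) = \<infinity>")
  case False
  note intz = intz_fin[OF False]
  have intlx: "integrable M (\<lambda>p. l (c * snd p + fst p))"
    using Bochner_Integration.integrable_add[OF int_ldiff[of c] intz(1)] by simp
  obtain v0 where v0: "l v0 = 0" using minzero by auto
  have h: "((\<lambda>t. \<integral>p. moreau l (c * snd p + fst p) t \<partial>M) \<longlongrightarrow> (\<integral>p. 0 \<partial>M)) at_top"
  proof (rule dc_top[where T=1 and w="\<lambda>p. l (c * snd p + fst p)"])
    show "(\<lambda>p. moreau l (c * snd p + fst p) t) \<in> borel_measurable M" if "1 \<le> t" for t
    proof -
      have "0 < t" using that by simp
      then show ?thesis by (intro measM) measurable
    qed
    show "integrable M (\<lambda>p. l (c * snd p + fst p))" by (rule intlx)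
  next
    fix t :: real and p :: "real \<times> real" assume t: "1 \<le> t"
    then show "\<bar>moreau l (c * snd p + fst p) t\<bar> \<le> l (c * snd p + fst p)"
      using mo_nonneg[of t] mo_le_l[of t] by simp
  next
    fix p :: "real \<times> real"
    show "((\<lambda>t. moreau l (c * snd p + fst p) t) \<longlongrightarrow> 0) at_top" by (rule mo_at_top[OF v0])
  qed simp
  have ev: "\<forall>\<^sub>F t in at_top. (\<integral>p. moreau l (c * snd p + fst p) t \<partial>M) - (\<integral>p. l (fst p) \<partial>M) = Lfun l PZ c t"
    using eventually_gt_at_top[of 0]
  proof eventually_elim
    case (elim t)
    have intm: "integrable M (\<lambda>p. moreau l (c * snd p + fst p) t)"
      using Bochner_Integration.integrable_add[OF int_F[OF elim, of c] intz(1)] by simp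
    show ?case unfolding Lfun_def by (rule Bochner_Integration.integral_diff[OF intm intz(1), symmetric])
  qed
  have "((\<lambda>t. (\<integral>p. moreau l (c * snd p + fst p) t \<partial>M) - (\<integral>p. l (fst p) \<partial>M)) \<longlongrightarrow> 0 - (\<integral>p. l (fst p) \<partial>M)) at_top"
    using tendsto_diff[OF h tendsto_const[of "\<integral>p. l (fst p) \<partial>M"]] by simp
  then have "((\<lambda>t. Lfun l PZ c t) \<longlongrightarrow> 0 - (\<integral>p. l (fst p) \<partial>M)) at_top"
    by (rule tendsto_cong[THEN iffD1, OF ev])
  then have "((\<lambda>t. ereal (Lfun l PZ c t)) \<longlongrightarrow> ereal (- (\<integral>p. l (fst p) \<partial>M))) at_top"
    by (intro tendsto_ereal) simp
  moreover have "(\<integral>p. l (fst p) \<partial>M) \<ge> 0" using nonneg by (intro integral_nonneg_AE) auto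
  ultimately show ?thesis unfolding intz(2) by simp
next
  case True
  define K where "K = (\<integral>p. (l (c * snd p + fst p) - l (fst p)) \<partial>M)"
  let ?x = "\<lambda>p. c * snd p + fst p"
  define f where "f i p = ennreal (l (?x p) - moreau l (?x p) (real (Suc i)))" for i p
  have mono_f: "f i p \<le> f j p" if "i \<le> j" for i j p
    unfolding f_def using that by (intro ennreal_leI diff_left_mono mo_anti) auto
  have incf: "incseq f" unfolding incseq_def le_fun_def using mono_f by auto
  have measf: "f i \<in> borel_measurable M" for i unfolding f_def by measurable
  obtain v0 where v0: "l v0 = 0" using minzero by auto
  have seqlim: "filterlim (\<lambda>i. real (Suc i)) at_top sequentially"
    using filterlim_sequentially_Suc[THEN iffD2, OF filterlim_real_sequentially] .
  have SUPf: "(SUP i. f i p) = ennreal (l (?x p))" for p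
  proof (rule LIMSEQ_unique)
    show "(\<lambda>i. f i p) \<longlonglongrightarrow> (SUP i. f i p)" by (rule LIMSEQ_SUP) (auto simp: incseq_def mono_f)
    have "(\<lambda>i. moreau l (?x p) (real (Suc i))) \<longlonglongrightarrow> 0"
      by (rule filterlim_compose[OF mo_at_top[OF v0] seqlim])
    then have "(\<lambda>i. l (?x p) - moreau l (?x p) (real (Suc i))) \<longlonglongrightarrow> l (?x p) - 0"
      by (intro tendsto_diff tendsto_const)
    then show "(\<lambda>i. f i p) \<longlonglongrightarrow> ennreal (l (?x p))" unfolding f_def by (intro tendsto_ennrealI) simp
  qed
  have infx: "(\<integral>\<^sup>+p. ennreal (l (?x p)) \<partial>M) = \<infinity>"
  proof (rule ccontr)
    assume fin: "(\<integral>\<^sup>+p. ennreal (l (?x p)) \<partial>M) \<noteq> \<infinity>"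
    have "(\<integral>\<^sup>+p. ennreal (l (fst p)) \<partial>M) \<le> (\<integral>\<^sup>+p. (ennreal (l (?x p)) + ennreal (norm (l (?x p) - l (fst p)))) \<partial>M)"
      by (intro nn_integral_mono) (auto simp: nonneg ennreal_plus[symmetric] simp del: ennreal_plus intro!: ennreal_leI)
    also have "\<dots> = (\<integral>\<^sup>+p. ennreal (l (?x p)) \<partial>M) + (\<integral>\<^sup>+p. ennreal (norm (l (?x p) - l (fst p))) \<partial>M)"
      by (rule nn_integral_add) measurable
    also have "\<dots> < \<infinity>"
    proof -
      have fin2: "(\<integral>\<^sup>+p. ennreal (norm (l (?x p) - l (fst p))) \<partial>M) < \<infinity>"
        using int_ldiff[of c] unfolding integrable_iff_bounded by simp
      then show ?thesis using fin by (simp add: less_top)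
    qed
    finally show False using True nn_lz_M by simp
  qed
  have SUPint: "(SUP i. \<integral>\<^sup>+p. f i p \<partial>M) = \<infinity>"
    using nn_integral_monotone_convergence_SUP[OF incf measf] SUPf infx by simp
  have intf: "(\<integral>\<^sup>+p. f i p \<partial>M) = ennreal (\<integral>p. (l (?x p) - moreau l (?x p) (real (Suc i))) \<partial>M)" for i
  proof -
    have "integrable M (\<lambda>p. - (moreau l (?x p) (real (Suc i)) - l (?x p)))"
      by (rule integrable_minus[OF int_mo_l]) simp
    then show ?thesis unfolding f_def
      by (intro nn_integral_eq_integral) (auto simp: mo_le_l)
  qed
  show ?thesis unfolding True
  proof (simp add: tendsto_MInfty, intro allI)
    fix r :: real
    define R where "R = max 0 (K - r)"
    have "ennreal R < (SUP i. \<integral>\<^sup>+p. f i p \<partial>M)" unfolding SUPint by simp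
    then obtain i where i: "ennreal R < (\<integral>\<^sup>+p. f i p \<partial>M)" by (auto simp: less_SUP_iff)
    then have Ri: "R < (\<integral>p. (l (?x p) - moreau l (?x p) (real (Suc i))) \<partial>M)"
      unfolding intf R_def by (subst (asm) ennreal_less_iff) auto
    show "\<forall>\<^sub>F t in at_top. Lfun l PZ c t < r"
      using eventually_ge_at_top[of "real (Suc i)"]
    proof eventually_elim
      case (elim t)
      then have t: "t > 0" by linarith
      have "(\<integral>p. (l (?x p) - moreau l (?x p) (real (Suc i))) \<partial>M) \<le> (\<integral>p. (l (?x p) - moreau l (?x p) t) \<partial>M)"
      proof (rule integral_mono)
        show "integrable M (\<lambda>p. l (?x p) - moreau l (?x p) (real (Suc i)))"
          using integrable_minus[OF int_mo_l[of "real (Suc i)" c]] by simp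
        show "integrable M (\<lambda>p. l (?x p) - moreau l (?x p) t)"
          using integrable_minus[OF int_mo_l[OF t, of c]] by simp
        show "l (?x p) - moreau l (?x p) (real (Suc i)) \<le> l (?x p) - moreau l (?x p) t" for p
          using mo_anti[of "real (Suc i)" t "?x p"] elim by simp
      qed
      moreover have "Lfun l PZ c t = - (\<integral>p. (l (?x p) - moreau l (?x p) t) \<partial>M) + K"
        unfolding Lfun_split[OF t, of c] K_def
        by (subst integral_minus[symmetric]) simp
      ultimately show ?case using Ri unfolding R_def by linarith
    qed
  qed
qed

end

locale wlln =
  fixes Q :: "'a measure" and Y :: "'a \<Rightarrow> real"
  assumes Q: "prob_space Q" and Yint: "integrable Q Y"
begin

abbreviation "N \<equiv> PiM (UNIV :: nat set) (\<lambda>_. Q)"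

lemma pps: "product_prob_space (\<lambda>_::nat. Q)"
  unfolding product_prob_space_def product_prob_space_axioms_def product_sigma_finite_def
  using Q by (auto simp: prob_space_imp_sigma_finite)

lemma N_prob: "prob_space N"
proof -
  interpret product_prob_space "\<lambda>_::nat. Q" "UNIV :: nat set" by (rule pps)
  show ?thesis by (rule P.prob_space_axioms)
qed

lemma comp_meas: "(\<lambda>\<omega>. \<omega> j) \<in> measurable N Q"
  by (rule measurable_component_singleton) simp

lemma comp_int:
  fixes h :: "'a \<Rightarrow> real"
  assumes "integrable Q h"
  shows "integrable N (\<lambda>\<omega>. h (\<omega> j))" and "(\<integral>\<omega>. h (\<omega> j) \<partial>N) = (\<integral>y. h y \<partial>Q)"
proof -
  interpret product_prob_space "\<lambda>_::nat. Q" "UNIV :: nat set" by (rule pps)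
  have d: "distr N Q (\<lambda>\<omega>. \<omega> j) = Q" by (rule PiM_component) simp
  have hm: "h \<in> borel_measurable Q" using assms by simp
  show "integrable N (\<lambda>\<omega>. h (\<omega> j))"
    using integrable_distr_eq[OF comp_meas[of j] hm] d assms by simp
  show "(\<integral>\<omega>. h (\<omega> j) \<partial>N) = (\<integral>y. h y \<partial>Q)"
    using integral_distr[OF comp_meas[of j] hm] d by simp
qed

lemma pair_int:
  fixes h :: "'a \<Rightarrow> real"
  assumes "integrable Q h" "i \<noteq> j"
  shows "(\<integral>\<omega>. h (\<omega> i) * h (\<omega> j) \<partial>N) = (\<integral>y. h y \<partial>Q)\<^sup>2"
proof -
  interpret product_prob_space "\<lambda>_::nat. Q" "UNIV :: nat set" by (rule pps)
  define J where "J = {i, j}"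
  have J: "finite J" "J \<subseteq> UNIV" unfolding J_def by auto
  have d: "distr N (PiM J (\<lambda>_. Q)) (\<lambda>\<omega>. restrict \<omega> J) = PiM J (\<lambda>_. Q)"
    by (rule distr_PiM_restrict_finite[OF J])
  have hm[measurable]: "h \<in> borel_measurable Q" using assms by simp
  have fm: "(\<lambda>x. \<Prod>k\<in>J. h (x k)) \<in> borel_measurable (PiM J (\<lambda>_. Q))" by measurable
  have rm: "(\<lambda>\<omega>. restrict \<omega> J) \<in> measurable N (PiM J (\<lambda>_. Q))" by measurable
  have "(\<integral>\<omega>. h (\<omega> i) * h (\<omega> j) \<partial>N) = (\<integral>\<omega>. (\<lambda>x. \<Prod>k\<in>J. h (x k)) (restrict \<omega> J) \<partial>N)"
    unfolding J_def using assms(2) by simp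
  also have "\<dots> = (\<integral>x. (\<Prod>k\<in>J. h (x k)) \<partial>distr N (PiM J (\<lambda>_. Q)) (\<lambda>\<omega>. restrict \<omega> J))"
    by (rule integral_distr[OF rm fm, symmetric])
  also have "\<dots> = (\<integral>x. (\<Prod>k\<in>J. h (x k)) \<partial>PiM J (\<lambda>_. Q))" unfolding d ..
  also have "\<dots> = (\<Prod>k\<in>J. (\<integral>y. h y \<partial>Q))"
    by (rule product_integral_prod) (use J assms in auto)
  also have "\<dots> = (\<integral>y. h y \<partial>Q)\<^sup>2" unfolding J_def using assms(2) by (simp add: power2_eq_square)
  finally show ?thesis .
qed

definition clamp :: "real \<Rightarrow> real \<Rightarrow> real" where
  "clamp K y = max (- K) (min K y)"

lemma clamp_abs: "K \<ge> 0 \<Longrightarrow> \<bar>clamp K y\<bar> \<le> K"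
  unfolding clamp_def by auto

lemma clamp_id: "\<bar>y\<bar> \<le> K \<Longrightarrow> clamp K y = y"
  unfolding clamp_def by auto

lemma clamp_diff: "K \<ge> 0 \<Longrightarrow> \<bar>y - clamp K y\<bar> \<le> \<bar>y\<bar>"
  unfolding clamp_def by auto

lemma clamp_meas[measurable]: "clamp K \<in> borel_measurable borel"
  unfolding clamp_def by measurable

lemma Ym[measurable]: "Y \<in> borel_measurable Q" using Yint by simp

lemma int_bounded_Q:
  fixes f :: "'a \<Rightarrow> real" and B :: real
  assumes "f \<in> borel_measurable Q" "\<And>y. \<bar>f y\<bar> \<le> B"
  shows "integrable Q f"
proof -
  interpret prob_space Q by (rule Q)
  show ?thesis using assms by (intro integrable_const_bound[where B=B]) auto
qed

lemma int_bounded_N: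
  fixes f :: "(nat \<Rightarrow> 'a) \<Rightarrow> real" and B :: real
  assumes "f \<in> borel_measurable N" "\<And>y. \<bar>f y\<bar> \<le> B"
  shows "integrable N f"
proof -
  interpret prob_space N by (rule N_prob)
  show ?thesis using assms by (intro integrable_const_bound[where B=B]) auto
qed

lemma int_le_const_N:
  fixes f :: "(nat \<Rightarrow> 'a) \<Rightarrow> real" and B :: real
  assumes "integrable N f" "\<And>y. f y \<le> B"
  shows "(\<integral>y. f y \<partial>N) \<le> B"
proof -
  interpret prob_space N by (rule N_prob)
  show ?thesis using assms by (intro integral_le_const) auto
qed

lemma sq_bound:
  fixes h :: "'a \<Rightarrow> real" and B :: real
  assumes hm[measurable]: "h \<in> borel_measurable Q" and hb: "\<And>y. \<bar>h y\<bar> \<le> B" and h0: "(\<integral>y. h y \<partial>Q) = 0"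
  shows "integrable N (\<lambda>\<omega>. (\<Sum>j<m. h (\<omega> j))\<^sup>2)"
    and "(\<integral>\<omega>. (\<Sum>j<m. h (\<omega> j))\<^sup>2 \<partial>N) \<le> real m * B\<^sup>2"
proof -
  have B: "B \<ge> 0" using hb[of undefined] by simp
  have hint: "integrable Q h" by (rule int_bounded_Q[OF hm hb])
  have ij: "integrable N (\<lambda>\<omega>. h (\<omega> i) * h (\<omega> j))" for i j
  proof (rule int_bounded_N[where B="B * B"])
    show "(\<lambda>\<omega>. h (\<omega> i) * h (\<omega> j)) \<in> borel_measurable N" by measurable
    fix \<omega> :: "nat \<Rightarrow> 'a"
    show "\<bar>h (\<omega> i) * h (\<omega> j)\<bar> \<le> B * B"
      unfolding abs_mult by (rule mult_mono) (use hb B in auto)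
  qed
  have eq: "(\<lambda>\<omega>. (\<Sum>j<m. h (\<omega> j))\<^sup>2) = (\<lambda>\<omega>. \<Sum>i<m. \<Sum>j<m. h (\<omega> i) * h (\<omega> j))"
    by (simp add: power2_eq_square sum_product)
  show "integrable N (\<lambda>\<omega>. (\<Sum>j<m. h (\<omega> j))\<^sup>2)"
    unfolding eq by (intro Bochner_Integration.integrable_sum ij)
  have "(\<integral>\<omega>. (\<Sum>j<m. h (\<omega> j))\<^sup>2 \<partial>N) = (\<Sum>i<m. \<Sum>j<m. (\<integral>\<omega>. h (\<omega> i) * h (\<omega> j) \<partial>N))"
    unfolding eq by (simp add: Bochner_Integration.integral_sum ij Bochner_Integration.integrable_sum)
  also have "\<dots> = (\<Sum>i<m. \<integral>\<omega>. h (\<omega> i) * h (\<omega> i) \<partial>N)"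
  proof (rule sum.cong[OF refl])
    fix i assume "i \<in> {..<m}"
    have "(\<Sum>j<m. (\<integral>\<omega>. h (\<omega> i) * h (\<omega> j) \<partial>N)) = (\<Sum>j<m. if j = i then (\<integral>\<omega>. h (\<omega> i) * h (\<omega> i) \<partial>N) else 0)"
      by (rule sum.cong[OF refl]) (auto simp: pair_int[OF hint] h0)
    also have "\<dots> = (\<integral>\<omega>. h (\<omega> i) * h (\<omega> i) \<partial>N)" using \<open>i \<in> {..<m}\<close> by simp
    finally show "(\<Sum>j<m. (\<integral>\<omega>. h (\<omega> i) * h (\<omega> j) \<partial>N)) = (\<integral>\<omega>. h (\<omega> i) * h (\<omega> i) \<partial>N)" .
  qed
  also have "\<dots> \<le> (\<Sum>i<m. B\<^sup>2)"
  proof (rule sum_mono)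
    fix i
    show "(\<integral>\<omega>. h (\<omega> i) * h (\<omega> i) \<partial>N) \<le> B\<^sup>2"
    proof (rule int_le_const_N[OF ij])
      fix \<omega> :: "nat \<Rightarrow> 'a"
      have "\<bar>h (\<omega> i)\<bar> * \<bar>h (\<omega> i)\<bar> \<le> B * B" by (rule mult_mono) (use hb B in auto)
      then show "h (\<omega> i) * h (\<omega> i) \<le> B\<^sup>2" by (simp add: power2_eq_square abs_mult[symmetric])
    qed
  qed
  also have "\<dots> = real m * B\<^sup>2" by simp
  finally show "(\<integral>\<omega>. (\<Sum>j<m. h (\<omega> j))\<^sup>2 \<partial>N) \<le> real m * B\<^sup>2" .
qed

definition TY :: "real \<Rightarrow> 'a \<Rightarrow> real" where "TY K y = clamp K (Y y)"
definition RY :: "real \<Rightarrow> 'a \<Rightarrow> real" where "RY K y = Y y - TY K y"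

lemma TY_meas[measurable]: "TY K \<in> borel_measurable Q" unfolding TY_def by measurable
lemma RY_meas[measurable]: "RY K \<in> borel_measurable Q" unfolding RY_def by measurable

lemma int_TY: "K \<ge> 0 \<Longrightarrow> integrable Q (TY K)"
  by (rule int_bounded_Q[where B=K]) (auto simp: TY_def clamp_abs)

lemma int_RY: "K \<ge> 0 \<Longrightarrow> integrable Q (RY K)"
  unfolding RY_def[abs_def] using Yint int_TY by auto

lemma prob_T:
  assumes K: "K \<ge> 0" and m: "m > 0" and e: "e > 0"
  shows "measure N {\<omega> \<in> space N. e \<le> \<bar>(\<Sum>j<m. TY K (\<omega> j)) / real m - (\<integral>y. TY K y \<partial>Q)\<bar>}
    \<le> 4 * K\<^sup>2 / (real m * e\<^sup>2)"
proof -
  interpret Qp: prob_space Q by (rule Q)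
  define \<mu> where "\<mu> = (\<integral>y. TY K y \<partial>Q)"
  define h where "h y = TY K y - \<mu>" for y
  have hm[measurable]: "h \<in> borel_measurable Q" unfolding h_def by measurable
  have mu: "\<bar>\<mu>\<bar> \<le> K"
  proof -
    have "\<bar>\<mu>\<bar> \<le> (\<integral>y. \<bar>TY K y\<bar> \<partial>Q)" unfolding \<mu>_def by (rule integral_abs_bound)
    also have "\<dots> \<le> K" by (rule Qp.integral_le_const[OF integrable_abs[OF int_TY[OF K]]]) (auto simp: TY_def clamp_abs K)
    finally show ?thesis .
  qed
  have hb: "\<bar>h y\<bar> \<le> 2 * K" for y
    using clamp_abs[OF K, of "Y y"] mu unfolding h_def TY_def by linarith
  have h0: "(\<integral>y. h y \<partial>Q) = 0"
    unfolding h_def using int_TY[OF K] by (simp add: Bochner_Integration.integral_diff \<mu>_def Qp.prob_space)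
  note sb = sq_bound[OF hm hb h0, of m]
  have eq: "(\<Sum>j<m. TY K (\<omega> j)) / real m - \<mu> = (\<Sum>j<m. h (\<omega> j)) / real m" for \<omega>
    using m by (simp add: h_def sum_subtractf field_simps)
  have I: "(\<integral>\<omega>. ((\<Sum>j<m. h (\<omega> j)) / real m)\<^sup>2 \<partial>N) \<le> 4 * K\<^sup>2 / real m"
  proof -
    have "(\<integral>\<omega>. ((\<Sum>j<m. h (\<omega> j)) / real m)\<^sup>2 \<partial>N) = (\<integral>\<omega>. (\<Sum>j<m. h (\<omega> j))\<^sup>2 \<partial>N) / (real m)\<^sup>2"
      by (simp add: power_divide)
    also have "\<dots> \<le> (real m * (2 * K)\<^sup>2) / (real m)\<^sup>2"
      using sb(2) by (intro divide_right_mono) auto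
    also have "\<dots> = 4 * K\<^sup>2 / real m" using m by (simp add: power2_eq_square field_simps)
    finally show ?thesis .
  qed
  have "{\<omega> \<in> space N. e \<le> \<bar>(\<Sum>j<m. TY K (\<omega> j)) / real m - \<mu>\<bar>}
      = {\<omega> \<in> space N. e\<^sup>2 \<le> ((\<Sum>j<m. h (\<omega> j)) / real m)\<^sup>2}"
    unfolding eq using e by (auto simp: abs_le_square_iff[symmetric])
  then have "measure N {\<omega> \<in> space N. e \<le> \<bar>(\<Sum>j<m. TY K (\<omega> j)) / real m - \<mu>\<bar>}
      = measure N {\<omega> \<in> space N. e\<^sup>2 \<le> ((\<Sum>j<m. h (\<omega> j)) / real m)\<^sup>2}" by simp
  also have "\<dots> \<le> (\<integral>\<omega>. ((\<Sum>j<m. h (\<omega> j)) / real m)\<^sup>2 \<partial>N) / e\<^sup>2"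
  proof (rule integral_Markov_inequality_measure)
    show "integrable N (\<lambda>\<omega>. ((\<Sum>j<m. h (\<omega> j)) / real m)\<^sup>2)"
      using sb(1) by (simp add: power_divide)
  qed (use e in auto)
  also have "\<dots> \<le> (4 * K\<^sup>2 / real m) / e\<^sup>2"
    using I by (rule divide_right_mono) simp
  also have "\<dots> = 4 * K\<^sup>2 / (real m * e\<^sup>2)" by simp
  finally show ?thesis unfolding \<mu>_def .
qed

lemma prob_R:
  assumes K: "K \<ge> 0" and m: "m > 0" and e: "e > 0"
  shows "measure N {\<omega> \<in> space N. e \<le> \<bar>(\<Sum>j<m. RY K (\<omega> j)) / real m - (\<integral>y. RY K y \<partial>Q)\<bar>}
    \<le> 2 * (\<integral>y. \<bar>RY K y\<bar> \<partial>Q) / e"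
proof -
  interpret Np: prob_space N by (rule N_prob)
  define \<mu> where "\<mu> = (\<integral>y. RY K y \<partial>Q)"
  have iR: "integrable Q (RY K)" by (rule int_RY[OF K])
  have iRj: "integrable N (\<lambda>\<omega>. RY K (\<omega> j))" for j by (rule comp_int(1)[OF iR])
  have iaRj: "integrable N (\<lambda>\<omega>. \<bar>RY K (\<omega> j)\<bar>)" for j using comp_int(1)[OF integrable_abs[OF iR]] by simp
  have iu: "integrable N (\<lambda>\<omega>. \<bar>(\<Sum>j<m. RY K (\<omega> j)) / real m - \<mu>\<bar>)"
    using iRj by (intro integrable_abs Bochner_Integration.integrable_diff integrable_divide Bochner_Integration.integrable_sum) auto
  have "measure N {\<omega> \<in> space N. e \<le> \<bar>(\<Sum>j<m. RY K (\<omega> j)) / real m - \<mu>\<bar>}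
      \<le> (\<integral>\<omega>. \<bar>(\<Sum>j<m. RY K (\<omega> j)) / real m - \<mu>\<bar> \<partial>N) / e"
    by (rule integral_Markov_inequality_measure[OF iu]) (use e in auto)
  also have "(\<integral>\<omega>. \<bar>(\<Sum>j<m. RY K (\<omega> j)) / real m - \<mu>\<bar> \<partial>N)
      \<le> (\<integral>\<omega>. ((\<Sum>j<m. \<bar>RY K (\<omega> j)\<bar>) / real m + \<bar>\<mu>\<bar>) \<partial>N)"
  proof (rule integral_mono[OF iu])
    show "integrable N (\<lambda>\<omega>. (\<Sum>j<m. \<bar>RY K (\<omega> j)\<bar>) / real m + \<bar>\<mu>\<bar>)"
      using iaRj by (intro Bochner_Integration.integrable_add integrable_divide Bochner_Integration.integrable_sum) auto
    fix \<omega> :: "nat \<Rightarrow> 'a"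
    have "\<bar>(\<Sum>j<m. RY K (\<omega> j)) / real m\<bar> \<le> (\<Sum>j<m. \<bar>RY K (\<omega> j)\<bar>) / real m"
      using m by (simp add: abs_div divide_right_mono sum_abs)
    then show "\<bar>(\<Sum>j<m. RY K (\<omega> j)) / real m - \<mu>\<bar> \<le> (\<Sum>j<m. \<bar>RY K (\<omega> j)\<bar>) / real m + \<bar>\<mu>\<bar>"
      by linarith
  qed
  also have "(\<integral>\<omega>. ((\<Sum>j<m. \<bar>RY K (\<omega> j)\<bar>) / real m + \<bar>\<mu>\<bar>) \<partial>N) = (\<integral>y. \<bar>RY K y\<bar> \<partial>Q) + \<bar>\<mu>\<bar>"
  proof -
    have "(\<integral>\<omega>. ((\<Sum>j<m. \<bar>RY K (\<omega> j)\<bar>) / real m + \<bar>\<mu>\<bar>) \<partial>N)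
        = (\<Sum>j<m. (\<integral>\<omega>. \<bar>RY K (\<omega> j)\<bar> \<partial>N)) / real m + \<bar>\<mu>\<bar>"
      using iaRj by (simp add: Bochner_Integration.integral_add Bochner_Integration.integral_sum Bochner_Integration.integrable_sum Np.prob_space)
    also have "\<dots> = (\<Sum>j<m. (\<integral>y. \<bar>RY K y\<bar> \<partial>Q)) / real m + \<bar>\<mu>\<bar>"
      using comp_int(2)[OF integrable_abs[OF iR]] by simp
    also have "\<dots> = (\<integral>y. \<bar>RY K y\<bar> \<partial>Q) + \<bar>\<mu>\<bar>" using m by simp
    finally show ?thesis .
  qed
  also have "\<bar>\<mu>\<bar> \<le> (\<integral>y. \<bar>RY K y\<bar> \<partial>Q)" unfolding \<mu>_def by (rule integral_abs_bound)
  finally show ?thesis unfolding \<mu>_def using e by (simp add: divide_right_mono)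
qed

lemma tail: "(\<lambda>n. \<integral>y. \<bar>RY (real n) y\<bar> \<partial>Q) \<longlonglongrightarrow> 0"
proof -
  have "(\<lambda>n. \<integral>y. \<bar>RY (real n) y\<bar> \<partial>Q) \<longlonglongrightarrow> (\<integral>y. 0 \<partial>Q)"
  proof (rule integral_dominated_convergence[where w="\<lambda>y. \<bar>Y y\<bar>"])
    show "integrable Q (\<lambda>y. \<bar>Y y\<bar>)" using Yint by simp
    show "AE y in Q. (\<lambda>n. \<bar>RY (real n) y\<bar>) \<longlonglongrightarrow> 0"
    proof (rule AE_I2, rule tendsto_eventually)
      fix y
      show "\<forall>\<^sub>F n in sequentially. \<bar>RY (real n) y\<bar> = 0"
        unfolding eventually_sequentially
      proof (intro exI[of _ "nat \<lceil>\<bar>Y y\<bar>\<rceil>"] allI impI)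
        fix n assume "nat \<lceil>\<bar>Y y\<bar>\<rceil> \<le> n"
        then have "\<bar>Y y\<bar> \<le> real n"
          by (meson le_trans nat_ceiling_le_eq of_nat_le_iff real_nat_ceiling_ge)
        then show "\<bar>RY (real n) y\<bar> = 0" by (simp add: RY_def TY_def clamp_id)
      qed
    qed
    show "AE y in Q. norm \<bar>RY (real n) y\<bar> \<le> \<bar>Y y\<bar>" for n
      by (intro AE_I2) (simp add: RY_def TY_def clamp_diff)
  qed auto
  then show ?thesis by simp
qed

theorem wlln_thm: "conv_in_prob N (\<lambda>m \<omega>. (\<Sum>j<m. Y (\<omega> j)) / real m) (\<integral>y. Y y \<partial>Q)"
  unfolding conv_in_prob_def
proof (intro conjI allI impI)
  show "(\<lambda>\<omega>. (\<Sum>j<m. Y (\<omega> j)) / real m) \<in> borel_measurable N" for m by measurable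
next
  interpret Np: prob_space N by (rule N_prob)
  fix \<epsilon> :: real assume \<epsilon>: "\<epsilon> > 0"
  define \<mu> where "\<mu> = (\<integral>y. Y y \<partial>Q)"
  show "(\<lambda>m. measure N {\<omega> \<in> space N. \<epsilon> < \<bar>(\<Sum>j<m. Y (\<omega> j)) / real m - (\<integral>y. Y y \<partial>Q)\<bar>}) \<longlonglongrightarrow> 0"
  proof (rule LIMSEQ_I)
    fix r :: real assume r: "r > 0"
    obtain n where n: "\<bar>(\<integral>y. \<bar>RY (real n) y\<bar> \<partial>Q)\<bar> < r * \<epsilon> / 8"
    proof -
      have "r * \<epsilon> / 8 > 0" using r \<epsilon> by simp
      from tail[unfolded lim_sequentially, rule_format, OF this] obtain no where
        "\<And>n. n \<ge> no \<Longrightarrow> dist (\<integral>y. \<bar>RY (real n) y\<bar> \<partial>Q) 0 < r * \<epsilon> / 8" by blast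
      from this[of no] show ?thesis using that by (simp add: dist_real_def)
    qed
    define K where "K = real n"
    have K: "K \<ge> 0" unfolding K_def by simp
    define m0 where "m0 = nat \<lceil>32 * K\<^sup>2 / (\<epsilon>\<^sup>2 * r)\<rceil> + 1"
    show "\<exists>no. \<forall>m\<ge>no. norm (measure N {\<omega> \<in> space N. \<epsilon> < \<bar>(\<Sum>j<m. Y (\<omega> j)) / real m - (\<integral>y. Y y \<partial>Q)\<bar>} - 0) < r"
    proof (intro exI[of _ m0] allI impI)
      fix m assume mm: "m0 \<le> m"
      then have m: "m > 0" unfolding m0_def by simp
      have mbig: "32 * K\<^sup>2 / (\<epsilon>\<^sup>2 * r) < real m"
      proof -
        have "32 * K\<^sup>2 / (\<epsilon>\<^sup>2 * r) \<le> real (nat \<lceil>32 * K\<^sup>2 / (\<epsilon>\<^sup>2 * r)\<rceil>)" by (rule real_nat_ceiling_ge)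
        also have "\<dots> < real m" using mm unfolding m0_def by simp
        finally show ?thesis .
      qed
      define ST where "ST \<omega> = (\<Sum>j<m. TY K (\<omega> j)) / real m - (\<integral>y. TY K y \<partial>Q)" for \<omega>
      define SR where "SR \<omega> = (\<Sum>j<m. RY K (\<omega> j)) / real m - (\<integral>y. RY K y \<partial>Q)" for \<omega>
      have split: "(\<Sum>j<m. Y (\<omega> j)) / real m - \<mu> = ST \<omega> + SR \<omega>" for \<omega>
      proof -
        have "\<mu> = (\<integral>y. TY K y \<partial>Q) + (\<integral>y. RY K y \<partial>Q)"
          unfolding \<mu>_def using int_TY[OF K] int_RY[OF K]
          by (subst Bochner_Integration.integral_add[symmetric]) (auto simp: RY_def)
        moreover have "(\<Sum>j<m. Y (\<omega> j)) = (\<Sum>j<m. TY K (\<omega> j)) + (\<Sum>j<m. RY K (\<omega> j))"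
          by (simp add: RY_def sum.distrib[symmetric])
        ultimately show ?thesis unfolding ST_def SR_def by (simp add: add_divide_distrib)
      qed
      have STm[measurable]: "ST \<in> borel_measurable N" unfolding ST_def by measurable
      have SRm[measurable]: "SR \<in> borel_measurable N" unfolding SR_def by measurable
      have "{\<omega> \<in> space N. \<epsilon> < \<bar>(\<Sum>j<m. Y (\<omega> j)) / real m - (\<integral>y. Y y \<partial>Q)\<bar>}
          \<subseteq> {\<omega> \<in> space N. \<epsilon> / 2 \<le> \<bar>ST \<omega>\<bar>} \<union> {\<omega> \<in> space N. \<epsilon> / 2 \<le> \<bar>SR \<omega>\<bar>}"
        using split unfolding \<mu>_def by force
      then have "measure N {\<omega> \<in> space N. \<epsilon> < \<bar>(\<Sum>j<m. Y (\<omega> j)) / real m - (\<integral>y. Y y \<partial>Q)\<bar>}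
          \<le> measure N ({\<omega> \<in> space N. \<epsilon> / 2 \<le> \<bar>ST \<omega>\<bar>} \<union> {\<omega> \<in> space N. \<epsilon> / 2 \<le> \<bar>SR \<omega>\<bar>})"
        by (intro Np.finite_measure_mono) measurable
      also have "\<dots> \<le> measure N {\<omega> \<in> space N. \<epsilon> / 2 \<le> \<bar>ST \<omega>\<bar>} + measure N {\<omega> \<in> space N. \<epsilon> / 2 \<le> \<bar>SR \<omega>\<bar>}"
        by (intro measure_Un_le) measurable
      also have "measure N {\<omega> \<in> space N. \<epsilon> / 2 \<le> \<bar>ST \<omega>\<bar>} \<le> 4 * K\<^sup>2 / (real m * (\<epsilon> / 2)\<^sup>2)"
        unfolding ST_def by (rule prob_T[OF K m]) (use \<epsilon> in simp)
      also have "measure N {\<omega> \<in> space N. \<epsilon> / 2 \<le> \<bar>SR \<omega>\<bar>} \<le> 2 * (\<integral>y. \<bar>RY K y\<bar> \<partial>Q) / (\<epsilon> / 2)"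
        unfolding SR_def by (rule prob_R[OF K m]) (use \<epsilon> in simp)
      also have "4 * K\<^sup>2 / (real m * (\<epsilon> / 2)\<^sup>2) < r / 2"
      proof -
        have "4 * K\<^sup>2 / (real m * (\<epsilon> / 2)\<^sup>2) = 16 * K\<^sup>2 / (real m * \<epsilon>\<^sup>2)"
          by (simp add: power_divide)
        also have "\<dots> < r / 2"
          using mbig m \<epsilon> r by (simp add: divide_less_eq field_simps)
        finally show ?thesis .
      qed
      also have "2 * (\<integral>y. \<bar>RY K y\<bar> \<partial>Q) / (\<epsilon> / 2) < r / 2"
      proof -
        have "(\<integral>y. \<bar>RY K y\<bar> \<partial>Q) < r * \<epsilon> / 8" using n unfolding K_def by simp
        then show ?thesis using \<epsilon> by (simp add: field_simps)
      qed
      finally have "measure N {\<omega> \<in> space N. \<epsilon> < \<bar>(\<Sum>j<m. Y (\<omega> j)) / real m - (\<integral>y. Y y \<partial>Q)\<bar>} < r" by simp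
      then show "norm (measure N {\<omega> \<in> space N. \<epsilon> < \<bar>(\<Sum>j<m. Y (\<omega> j)) / real m - (\<integral>y. Y y \<partial>Q)\<bar>} - 0) < r"
        by simp
    qed
  qed
qed

end

context cvx
begin

lemma moreau_vec_sum:
  assumes t: "\<tau> > 0"
  shows "moreau_vec m (sep_loss l m) x \<tau> = (\<Sum>j<m. moreau l (x j) \<tau>)"
proof -
  define G where "G v = (1 / (2 * \<tau>)) * sqnorm m (\<lambda>j. x j - v j) + sep_loss l m v" for v
  have Gs: "G v = (\<Sum>j<m. phi (x j) \<tau> (v j))" for v
    unfolding G_def sqnorm_def sep_loss_def phi_def by (simp add: sum_distrib_left sum.distrib)
  have low: "(\<Sum>j<m. moreau l (x j) \<tau>) \<le> G v" for v
    unfolding Gs by (intro sum_mono mo_le[OF t])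
  define vs where "vs j = (if j < m then pm (x j) \<tau> else 0)" for j
  have vs: "vs \<in> rvec m" unfolding vs_def rvec_def by auto
  have Gvs: "G vs = (\<Sum>j<m. moreau l (x j) \<tau>)"
    unfolding Gs vs_def by (intro sum.cong refl) (simp add: mo_eq[OF t])
  have "moreau_vec m (sep_loss l m) x \<tau> = (INF v\<in>rvec m. G v)"
    unfolding moreau_vec_def G_def ..
  also have "\<dots> = (\<Sum>j<m. moreau l (x j) \<tau>)"
  proof (rule antisym)
    show "(INF v\<in>rvec m. G v) \<le> (\<Sum>j<m. moreau l (x j) \<tau>)"
      unfolding Gvs[symmetric] by (rule cINF_lower[OF _ vs]) (auto intro: bdd_belowI2 low)
    show "(\<Sum>j<m. moreau l (x j) \<tau>) \<le> (INF v\<in>rvec m. G v)"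
      using vs by (intro cINF_greatest low) auto
  qed
  finally show ?thesis .
qed

end

context stp
begin

lemma part2:
  assumes t: "\<tau> > 0"
  shows "conv_in_prob (iidZG PZ)
        (\<lambda>m \<omega>. (moreau_vec m (sep_loss l m) (\<lambda>j. c * snd (\<omega> j) + fst (\<omega> j)) \<tau>
                 - sep_loss l m (\<lambda>j. fst (\<omega> j))) / real m)
        (Lfun l PZ c \<tau>)"
proof -
  define F where "F p = moreau l (c * snd p + fst p) \<tau> - l (fst p)" for p
  have Fi: "integrable M F" unfolding F_def[abs_def] by (rule int_F[OF t])
  interpret W: wlln M F by (rule wlln.intro[OF M_prob Fi])
  have eq: "(\<lambda>m \<omega>. (moreau_vec m (sep_loss l m) (\<lambda>j. c * snd (\<omega> j) + fst (\<omega> j)) \<tau>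
                 - sep_loss l m (\<lambda>j. fst (\<omega> j))) / real m) = (\<lambda>m \<omega>. (\<Sum>j<m. F (\<omega> j)) / real m)"
    unfolding moreau_vec_sum[OF t] sep_loss_def F_def by (simp add: sum_subtractf)
  show ?thesis
    unfolding eq iidZG_def using W.wlln_thm unfolding F_def Lfun_def by simp
qed

end

theorem lemma4p1:
  fixes l :: "real \<Rightarrow> real" and PZ :: "real measure"
  assumes conv: "convex_on UNIV l"
    and nonneg: "\<And>v. l v \<ge> 0"
    and minzero: "\<exists>v. l v = 0"
    and PZ: "prob_space PZ" "sets PZ = sets borel"
    and moment: "\<And>c. (\<integral>\<^sup>+p. ennreal ((dplus l (c * snd p + fst p))\<^sup>2) \<partial>ZG PZ) < \<infinity>"
  shows
    "((\<forall>c. \<forall>\<tau>>0. integrable (ZG PZ) (\<lambda>p. moreau l (c * snd p + fst p) \<tau> - l (fst p)))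
     \<and> convex_on {p :: real \<times> real. snd p > 0} (\<lambda>p. Lfun l PZ (fst p) (snd p))
     \<and> continuous_on {p :: real \<times> real. snd p > 0} (\<lambda>p. Lfun l PZ (fst p) (snd p)))
     \<and> (\<forall>c. \<forall>\<tau>>0. conv_in_prob (iidZG PZ)
        (\<lambda>m \<omega>. (moreau_vec m (sep_loss l m) (\<lambda>j. c * snd (\<omega> j) + fst (\<omega> j)) \<tau>
                 - sep_loss l m (\<lambda>j. fst (\<omega> j))) / real m)
        (Lfun l PZ c \<tau>))
     \<and> (\<forall>c. integrable (ZG PZ) (\<lambda>p. l (c * snd p + fst p) - l (fst p))
        \<and> ((\<lambda>\<tau>. Lfun l PZ c \<tau>) \<longlongrightarrow> (\<integral>p. (l (c * snd p + fst p) - l (fst p)) \<partial>ZG PZ)) (at_right 0))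
     \<and> (((\<lambda>\<tau>. Lfun l PZ 0 \<tau>) \<longlongrightarrow> 0) (at_right 0))
     \<and> (\<exists>D d. (\<forall>\<tau>>0. ((\<lambda>t. Lfun l PZ 0 t) has_real_derivative D \<tau>) (at \<tau>))
        \<and> (D \<longlongrightarrow> d) (at_right 0) \<and> d \<le> 0)
     \<and> (\<forall>c. ((\<lambda>\<tau>. ereal (Lfun l PZ c \<tau>)) \<longlongrightarrow> - enn2ereal (\<integral>\<^sup>+z. ennreal (l z) \<partial>PZ)) at_top)
     \<and> (\<forall>c. \<forall>\<tau>>0. ereal (Lfun l PZ c \<tau>) \<ge> - enn2ereal (\<integral>\<^sup>+z. ennreal (l z) \<partial>PZ))
     \<and> (\<forall>c. ((\<lambda>\<tau>. Lfun l PZ c \<tau> / \<tau>) \<longlongrightarrow> 0) at_top)"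
  proof -
  have "stp l PZ"
    unfolding stp_def stp_axioms_def cvx_def using conv nonneg PZ minzero moment by auto
  then interpret stp l PZ .
  show ?thesis
  proof (intro conjI allI impI)
    show "integrable (ZG PZ) (\<lambda>p. moreau l (c * snd p + fst p) \<tau> - l (fst p))" if "\<tau> > 0" for c \<tau>
      using int_F[OF that] .
  qed (use Lfun_convex Lfun_cont part2 int_ldiff Lfun_at_right0 Lfun0_at_right0 deriv_part Lfun_top Lfun_lower Lfun_div_top in auto)
qed

end
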